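(* Let $\lambda_A:{\mathcal U}_A^{\ge0}\otimes{\mathcal U}_q^{c_m}\to{\mathcal U}_A^{\ge0}$ be the linear map $\lambda_A(u\otimes v)=\mathrm{ad}(\pi_A(u))(v)$. Then $\mathrm{Im}(\lambda_A)\subseteq{\mathcal U}_q^{c_m}$, and $\lambda_A$ endows ${\mathcal U}_q^{c_m}$ with the structure of a left ${\mathcal U}_A^{\ge0}$-module algebra.
   Context: $k$ algebraically closed of characteristic $0$, $q\in k^\times$ not a root of unity, $\hat q=q-q^{-1}$, $m>1$, $[u,v]=uv-q^{-1}vu$. $Q(A_m)$ is the lattice of $(a_1,\dots,a_{m+1})\in\mathbb Z^{m+1}$ with $\sum a_i=0$, standard inner product, simple roots $\alpha_i=e_i-e_{i+1}$, reflections $s_i$. ${\mathcal U}_q(\mathfrak{sl}_{m+1})$ is generated by $E_i,F_i$ ($1\le i\le m$), $K_\mu$ with relations $K_0=1$, $K_\mu K_\lambda=K_{\mu+\lambda}$, $K_\mu E_i=q^{\langle\mu,\alpha_i\rangle}E_iK_\mu$, $K_\mu F_i=q^{-\langle\mu,\alpha_i\rangle}F_iK_\mu$, $E_iE_j=E_jE_i$, $F_iF_j=F_jF_i$ if $\langle\alpha_i,\alpha_j\rangle\in\{0,2\}$, $E_i[E_i,E_j]=q[E_i,E_j]E_i$, $F_i[F_i,F_j]=q[F_i,F_j]F_i$ if $\langle\alpha_i,\alpha_j\rangle=-1$, $E_iF_j-F_jE_i=\delta_{ij}(K_{\alpha_i}-K_{-\alpha_i})/\hat q$; Hopf structure $\Delta(E_i)=K_{-\alpha_i}\otimes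 E_i+E_i\otimes1$, $\Delta(K_\mu)=K_\mu\otimes K_\mu$, $\Delta(F_i)=1\otimes F_i+F_i\otimes K_{\alpha_i}$, $S(E_i)=-K_{\alpha_i}E_i$, $S(K_\mu)=K_{-\mu}$, $\epsilon(E_i)=0$, $\epsilon(K_\mu)=1$; Lusztig automorphisms $T_iK_\mu=K_{s_i\mu}$, $T_iE_i=-F_iK_{\alpha_i}$, $T_iE_j=E_j$ if $\langle\alpha_i,\alpha_j\rangle=0$, $T_iE_j=E_iE_j-q^{-1}E_jE_i$ if $\langle\alpha_i,\alpha_j\rangle=-1$. ${\mathcal U}_q^{c_m}$ is the subalgebra generated by $z_j=T_1\cdots T_{j-1}E_j$ ($1\le j\le m$) for $c_m=s_1\cdots s_m$. ${\mathcal U}_A^{\ge0}$ is the Hopf subalgebra generated by the $E_i$ and $K_\mu$. $\pi_A:{\mathcal U}_A^{\ge0}\to{\mathcal U}_A^{\ge0}$ is the algebra map with $\pi_A(E_1)=0$, $\pi_A(E_i)=E_i$ ($1<i\le m$), $\pi_A(K_\mu)=K_\mu$. $\mathrm{ad}(h)(u)=\sum h_{(1)}uS(h_{(2)})$. *)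

theory Defs
  imports "HOL-Computational_Algebra.Polynomial"
begin

text \<open>Weights mu in Z^(m+1) are encoded as functions nat => int, coordinate i for i in 1..m+1.\<close>

definition in_root_lattice :: "nat \<Rightarrow> (nat \<Rightarrow> int) \<Rightarrow> bool" where
  "in_root_lattice m mu \<longleftrightarrow> (\<forall>i. mu i \<noteq> 0 \<longrightarrow> 1 \<le> i \<and> i \<le> m + 1) \<and> (\<Sum>i=1..m+1. mu i) = 0"

definition ipr :: "nat \<Rightarrow> (nat \<Rightarrow> int) \<Rightarrow> (nat \<Rightarrow> int) \<Rightarrow> int" where
  "ipr m mu la = (\<Sum>i=1..m+1. mu i * la i)"

definition alpha :: "nat \<Rightarrow> nat \<Rightarrow> int" where
  "alpha i = (\<lambda>j. if j = i then 1 else if j = i + 1 then -1 else 0)"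

definition wplus :: "(nat \<Rightarrow> int) \<Rightarrow> (nat \<Rightarrow> int) \<Rightarrow> nat \<Rightarrow> int" where
  "wplus mu la = (\<lambda>j. mu j + la j)"

definition wneg :: "(nat \<Rightarrow> int) \<Rightarrow> nat \<Rightarrow> int" where
  "wneg mu = (\<lambda>j. - mu j)"

definition refl_s :: "nat \<Rightarrow> nat \<Rightarrow> (nat \<Rightarrow> int) \<Rightarrow> nat \<Rightarrow> int" where
  "refl_s m i mu = (\<lambda>j. mu j - ipr m mu (alpha i) * alpha i j)"

datatype gen = E nat | F nat | K "nat \<Rightarrow> int"

datatype 'k fexpr = Gen gen | Scal 'k | Add "'k fexpr" "'k fexpr" | Mul "'k fexpr" "'k fexpr"

definition smult :: "'k \<Rightarrow> 'k fexpr \<Rightarrow> 'k fexpr" where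
  "smult c x = Mul (Scal c) x"

definition sub :: "'k::ring_1 fexpr \<Rightarrow> 'k fexpr \<Rightarrow> 'k fexpr" where
  "sub x y = Add x (Mul (Scal (-1)) y)"

definition one :: "'k::one fexpr" where "one = Scal 1"

definition valid_gen :: "nat \<Rightarrow> gen \<Rightarrow> bool" where
  "valid_gen m g = (case g of E i \<Rightarrow> 1 \<le> i \<and> i \<le> m | F i \<Rightarrow> 1 \<le> i \<and> i \<le> m
                    | K mu \<Rightarrow> in_root_lattice m mu)"

definition qbr :: "'k::field \<Rightarrow> 'k fexpr \<Rightarrow> 'k fexpr \<Rightarrow> 'k fexpr" where
  "qbr q u v = sub (Mul u v) (smult (inverse q) (Mul v u))"

definition qhat :: "'k::field \<Rightarrow> 'k" where "qhat q = q - inverse q"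

inductive Urel :: "nat \<Rightarrow> 'k::field \<Rightarrow> 'k fexpr \<Rightarrow> 'k fexpr \<Rightarrow> bool" for m q where
  junk: "\<not> valid_gen m g \<Longrightarrow> Urel m q (Gen g) (Scal 0)"
| K0: "Urel m q (Gen (K (\<lambda>_. 0))) one"
| KK: "in_root_lattice m mu \<Longrightarrow> in_root_lattice m la \<Longrightarrow>
        Urel m q (Mul (Gen (K mu)) (Gen (K la))) (Gen (K (wplus mu la)))"
| KE: "in_root_lattice m mu \<Longrightarrow> 1 \<le> i \<Longrightarrow> i \<le> m \<Longrightarrow>
        Urel m q (Mul (Gen (K mu)) (Gen (E i)))
                 (smult (q powi ipr m mu (alpha i)) (Mul (Gen (E i)) (Gen (K mu))))"
| KF: "in_root_lattice m mu \<Longrightarrow> 1 \<le> i \<Longrightarrow> i \<le> m \<Longrightarrow>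
        Urel m q (Mul (Gen (K mu)) (Gen (F i)))
                 (smult (q powi (- ipr m mu (alpha i))) (Mul (Gen (F i)) (Gen (K mu))))"
| EEcomm: "1 \<le> i \<Longrightarrow> i \<le> m \<Longrightarrow> 1 \<le> j \<Longrightarrow> j \<le> m \<Longrightarrow> ipr m (alpha i) (alpha j) \<in> {0, 2} \<Longrightarrow>
        Urel m q (Mul (Gen (E i)) (Gen (E j))) (Mul (Gen (E j)) (Gen (E i)))"
| FFcomm: "1 \<le> i \<Longrightarrow> i \<le> m \<Longrightarrow> 1 \<le> j \<Longrightarrow> j \<le> m \<Longrightarrow> ipr m (alpha i) (alpha j) \<in> {0, 2} \<Longrightarrow>
        Urel m q (Mul (Gen (F i)) (Gen (F j))) (Mul (Gen (F j)) (Gen (F i)))"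
| EEserre: "1 \<le> i \<Longrightarrow> i \<le> m \<Longrightarrow> 1 \<le> j \<Longrightarrow> j \<le> m \<Longrightarrow> ipr m (alpha i) (alpha j) = -1 \<Longrightarrow>
        Urel m q (Mul (Gen (E i)) (qbr q (Gen (E i)) (Gen (E j))))
                 (smult q (Mul (qbr q (Gen (E i)) (Gen (E j))) (Gen (E i))))"
| FFserre: "1 \<le> i \<Longrightarrow> i \<le> m \<Longrightarrow> 1 \<le> j \<Longrightarrow> j \<le> m \<Longrightarrow> ipr m (alpha i) (alpha j) = -1 \<Longrightarrow>
        Urel m q (Mul (Gen (F i)) (qbr q (Gen (F i)) (Gen (F j))))
                 (smult q (Mul (qbr q (Gen (F i)) (Gen (F j))) (Gen (F i))))"
| EF: "1 \<le> i \<Longrightarrow> i \<le> m \<Longrightarrow> 1 \<le> j \<Longrightarrow> j \<le> m \<Longrightarrow>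
        Urel m q (sub (Mul (Gen (E i)) (Gen (F j))) (Mul (Gen (F j)) (Gen (E i))))
                 (if i = j then smult (inverse (qhat q))
                      (sub (Gen (K (alpha i))) (Gen (K (wneg (alpha i))))) else Scal 0)"

text \<open>Equality in U_q(sl_(m+1)): the least congruence on expressions containing the axioms of a
  unital associative k-algebra (Scal c = c*1) and the defining relations. Quotienting the
  expressions by it yields exactly U_q(sl_(m+1)).\<close>

inductive Ueq :: "nat \<Rightarrow> 'k::field \<Rightarrow> 'k fexpr \<Rightarrow> 'k fexpr \<Rightarrow> bool" for m q where
  rel: "Urel m q x y \<Longrightarrow> Ueq m q x y"
| refl: "Ueq m q x x"
| sym: "Ueq m q x y \<Longrightarrow> Ueq m q y x"
| trans: "Ueq m q x y \<Longrightarrow> Ueq m q y z \<Longrightarrow> Ueq m q x z"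
| add_cong: "Ueq m q x x' \<Longrightarrow> Ueq m q y y' \<Longrightarrow> Ueq m q (Add x y) (Add x' y')"
| mul_cong: "Ueq m q x x' \<Longrightarrow> Ueq m q y y' \<Longrightarrow> Ueq m q (Mul x y) (Mul x' y')"
| add_assoc: "Ueq m q (Add (Add x y) z) (Add x (Add y z))"
| add_comm: "Ueq m q (Add x y) (Add y x)"
| add_zero: "Ueq m q (Add x (Scal 0)) x"
| add_inv: "Ueq m q (Add x (Mul (Scal (-1)) x)) (Scal 0)"
| mul_assoc: "Ueq m q (Mul (Mul x y) z) (Mul x (Mul y z))"
| mul_one_l: "Ueq m q (Mul (Scal 1) x) x"
| mul_one_r: "Ueq m q (Mul x (Scal 1)) x"
| distrib_l: "Ueq m q (Mul x (Add y z)) (Add (Mul x y) (Mul x z))"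
| distrib_r: "Ueq m q (Mul (Add x y) z) (Add (Mul x z) (Mul y z))"
| scal_add: "Ueq m q (Scal (a + b)) (Add (Scal a) (Scal b))"
| scal_mul: "Ueq m q (Scal (a * b)) (Mul (Scal a) (Scal b))"
| scal_central: "Ueq m q (Mul (Scal a) x) (Mul x (Scal a))"

section \<open>Hopf structure, on representatives\<close>

text \<open>Coproduct as a formal sum of pure tensors (coefficient, left factor, right factor).\<close>

definition Delta_gen :: "nat \<Rightarrow> gen \<Rightarrow> ('k::field \<times> 'k fexpr \<times> 'k fexpr) list" where
  "Delta_gen m g = (if \<not> valid_gen m g then [] else
     (case g of
        E i \<Rightarrow> [(1, Gen (K (wneg (alpha i))), Gen (E i)), (1, Gen (E i), one)]
      | F i \<Rightarrow> [(1, one, Gen (F i)), (1, Gen (F i), Gen (K (alpha i)))]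
      | K mu \<Rightarrow> [(1, Gen (K mu), Gen (K mu))]))"

primrec Delta :: "nat \<Rightarrow> 'k::field fexpr \<Rightarrow> ('k \<times> 'k fexpr \<times> 'k fexpr) list" where
  "Delta m (Gen g) = Delta_gen m g"
| "Delta m (Scal c) = [(c, one, one)]"
| "Delta m (Add x y) = Delta m x @ Delta m y"
| "Delta m (Mul x y) = concat (map (\<lambda>(c, x1, x2). map (\<lambda>(d, y1, y2). (c * d, Mul x1 y1, Mul x2 y2)) (Delta m y)) (Delta m x))"

definition antipode_gen :: "nat \<Rightarrow> gen \<Rightarrow> 'k::field fexpr" where
  "antipode_gen m g = (if \<not> valid_gen m g then Scal 0 else
     (case g of
        E i \<Rightarrow> smult (-1) (Mul (Gen (K (alpha i))) (Gen (E i)))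
      | F i \<Rightarrow> smult (-1) (Mul (Gen (F i)) (Gen (K (wneg (alpha i)))))
      | K mu \<Rightarrow> Gen (K (wneg mu))))"

primrec antipode :: "nat \<Rightarrow> 'k::field fexpr \<Rightarrow> 'k fexpr" where
  "antipode m (Gen g) = antipode_gen m g"
| "antipode m (Scal c) = Scal c"
| "antipode m (Add x y) = Add (antipode m x) (antipode m y)"
| "antipode m (Mul x y) = Mul (antipode m y) (antipode m x)"

definition counit_gen :: "nat \<Rightarrow> gen \<Rightarrow> 'k::field" where
  "counit_gen m g = (if \<not> valid_gen m g then 0 else
     (case g of E i \<Rightarrow> 0 | F i \<Rightarrow> 0 | K mu \<Rightarrow> 1))"

primrec counit :: "nat \<Rightarrow> 'k::field fexpr \<Rightarrow> 'k" where
  "counit m (Gen g) = counit_gen m g"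
| "counit m (Scal c) = c"
| "counit m (Add x y) = counit m x + counit m y"
| "counit m (Mul x y) = counit m x * counit m y"

definition esum :: "'k::zero fexpr list \<Rightarrow> 'k fexpr" where
  "esum xs = foldr Add xs (Scal 0)"

definition ad :: "nat \<Rightarrow> 'k::field fexpr \<Rightarrow> 'k fexpr \<Rightarrow> 'k fexpr" where
  "ad m h u = esum (map (\<lambda>(c, h1, h2). smult c (Mul (Mul h1 u) (antipode m h2))) (Delta m h))"

definition T_gen :: "nat \<Rightarrow> 'k::field \<Rightarrow> nat \<Rightarrow> gen \<Rightarrow> 'k fexpr" where
  "T_gen m q i g = (case g of
       K mu \<Rightarrow> Gen (K (refl_s m i mu))
     | E j \<Rightarrow> (if \<not> (1 \<le> j \<and> j \<le> m) then Gen (E j)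
               else if j = i then smult (-1) (Mul (Gen (F i)) (Gen (K (alpha i))))
               else if ipr m (alpha i) (alpha j) = -1
                 then sub (Mul (Gen (E i)) (Gen (E j))) (smult (inverse q) (Mul (Gen (E j)) (Gen (E i))))
               else Gen (E j))
     | F j \<Rightarrow> (if \<not> (1 \<le> j \<and> j \<le> m) then Gen (F j)
               else if j = i then smult (-1) (Mul (Gen (K (wneg (alpha i)))) (Gen (E i)))
               else if ipr m (alpha i) (alpha j) = -1
                 then sub (Mul (Gen (F j)) (Gen (F i))) (smult q (Mul (Gen (F i)) (Gen (F j))))
               else Gen (F j)))"

primrec Tl :: "nat \<Rightarrow> 'k::field \<Rightarrow> nat \<Rightarrow> 'k fexpr \<Rightarrow> 'k fexpr" where
  "Tl m q i (Gen g) = T_gen m q i g"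
| "Tl m q i (Scal c) = Scal c"
| "Tl m q i (Add x y) = Add (Tl m q i x) (Tl m q i y)"
| "Tl m q i (Mul x y) = Mul (Tl m q i x) (Tl m q i y)"

definition zgen :: "nat \<Rightarrow> 'k::field \<Rightarrow> nat \<Rightarrow> 'k fexpr" where
  "zgen m q j = foldr (Tl m q) [1..<j] (Gen (E j))"

primrec piA :: "'k fexpr \<Rightarrow> 'k::zero fexpr" where
  "piA (Gen g) = (if g = E 1 then Scal 0 else Gen g)"
| "piA (Scal c) = Scal c"
| "piA (Add x y) = Add (piA x) (piA y)"
| "piA (Mul x y) = Mul (piA x) (piA y)"

inductive_set subalg :: "'k fexpr set \<Rightarrow> 'k fexpr set" for G where
  scal: "Scal c \<in> subalg G"
| gen: "x \<in> G \<Longrightarrow> x \<in> subalg G"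
| add: "x \<in> subalg G \<Longrightarrow> y \<in> subalg G \<Longrightarrow> Add x y \<in> subalg G"
| mul: "x \<in> subalg G \<Longrightarrow> y \<in> subalg G \<Longrightarrow> Mul x y \<in> subalg G"

definition Uge :: "nat \<Rightarrow> 'k fexpr set" where
  "Uge m = subalg ({Gen (E i) | i. 1 \<le> i \<and> i \<le> m} \<union> {Gen (K mu) | mu. in_root_lattice m mu})"

definition Ucm :: "nat \<Rightarrow> 'k::field \<Rightarrow> 'k fexpr set" where
  "Ucm m q = subalg {zgen m q j | j. 1 \<le> j \<and> j \<le> m}"

definition lamA :: "nat \<Rightarrow> 'k::field fexpr \<Rightarrow> 'k fexpr \<Rightarrow> 'k fexpr" where
  "lamA m u v = ad m (piA u) v"

definition alg_closed_field :: "'k::field itself \<Rightarrow> bool" where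
  "alg_closed_field _ \<longleftrightarrow> (\<forall>p :: 'k poly. degree p > 0 \<longrightarrow> (\<exists>x. poly p x = 0))"

end

theory Submission
  imports Defs
begin


inductive FEq :: "'k::field fexpr \<Rightarrow> 'k fexpr \<Rightarrow> bool" where
  frefl: "FEq x x"
| fsym: "FEq x y \<Longrightarrow> FEq y x"
| ftrans: "FEq x y \<Longrightarrow> FEq y z \<Longrightarrow> FEq x z"
| add_cong: "FEq x x' \<Longrightarrow> FEq y y' \<Longrightarrow> FEq (Add x y) (Add x' y')"
| mul_cong: "FEq x x' \<Longrightarrow> FEq y y' \<Longrightarrow> FEq (Mul x y) (Mul x' y')"
| add_assoc: "FEq (Add (Add x y) z) (Add x (Add y z))"
| add_comm: "FEq (Add x y) (Add y x)"
| add_zero: "FEq (Add x (Scal 0)) x"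
| add_inv: "FEq (Add x (Mul (Scal (-1)) x)) (Scal 0)"
| mul_assoc: "FEq (Mul (Mul x y) z) (Mul x (Mul y z))"
| mul_one_l: "FEq (Mul (Scal 1) x) x"
| mul_one_r: "FEq (Mul x (Scal 1)) x"
| distrib_l: "FEq (Mul x (Add y z)) (Add (Mul x y) (Mul x z))"
| distrib_r: "FEq (Mul (Add x y) z) (Add (Mul x z) (Mul y z))"
| scal_add: "FEq (Scal (a + b)) (Add (Scal a) (Scal b))"
| scal_mul: "FEq (Scal (a * b)) (Mul (Scal a) (Scal b))"
| scal_central: "FEq (Mul (Scal a) x) (Mul x (Scal a))"

lemma FEq_Ueq: "FEq x y \<Longrightarrow> Ueq m q x y"
  by (induction rule: FEq.induct) (auto intro: Ueq.intros)

primrec ev0 :: "'k::field fexpr \<Rightarrow> 'k" where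
  "ev0 (Gen g) = 0" | "ev0 (Scal c) = c" | "ev0 (Add x y) = ev0 x + ev0 y" | "ev0 (Mul x y) = ev0 x * ev0 y"

lemma FEq_ev0: "FEq x y \<Longrightarrow> ev0 x = ev0 y"
  by (induction rule: FEq.induct) (auto simp: algebra_simps)

quotient_type (overloaded) 'k free = "'k::field fexpr" / FEq
  morphisms rep_free abs_free
  by (rule equivpI) (auto simp: reflp_def symp_def transp_def intro: FEq.intros)

instantiation free :: (field) ring_1
begin
lift_definition zero_free :: "'a free" is "Scal 0" .
lift_definition one_free :: "'a free" is "Scal 1" .
lift_definition plus_free :: "'a free \<Rightarrow> 'a free \<Rightarrow> 'a free" is Add by (rule FEq.add_cong)
lift_definition times_free :: "'a free \<Rightarrow> 'a free \<Rightarrow> 'a free" is Mul by (rule FEq.mul_cong)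
lift_definition uminus_free :: "'a free \<Rightarrow> 'a free" is "\<lambda>x. Mul (Scal (-1)) x" by (rule FEq.mul_cong[OF FEq.frefl])
lift_definition minus_free :: "'a free \<Rightarrow> 'a free \<Rightarrow> 'a free" is "\<lambda>x y. Add x (Mul (Scal (-1)) y)"
  by (rule FEq.add_cong, assumption, rule FEq.mul_cong[OF FEq.frefl])
instance
proof
  fix a b c :: "'a free"
  show "a + b + c = a + (b + c)" by transfer (rule FEq.add_assoc)
  show "a + b = b + a" by transfer (rule FEq.add_comm)
  show "0 + a = a" by transfer (meson FEq.add_comm FEq.add_zero FEq.ftrans)
  show "- a + a = 0" by transfer (meson FEq.add_comm FEq.add_inv FEq.ftrans)
  show "a - b = a + - b" by transfer (rule FEq.frefl)
  show "a * b * c = a * (b * c)" by transfer (rule FEq.mul_assoc)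
  show "(a + b) * c = a * c + b * c" by transfer (rule FEq.distrib_r)
  show "a * (b + c) = a * b + a * c" by transfer (rule FEq.distrib_l)
  show "1 * a = a" by transfer (rule FEq.mul_one_l)
  show "a * 1 = a" by transfer (rule FEq.mul_one_r)
  show "(0::'a free) \<noteq> 1" by transfer (auto dest: FEq_ev0)
qed
end

lift_definition sc :: "'k::field \<Rightarrow> 'k free" is Scal .

lemma sc_add: "sc (a + b) = sc a + sc b" by transfer (rule FEq.scal_add)
lemma sc_mult: "sc (a * b) = sc a * sc b" by transfer (rule FEq.scal_mul)
lemma sc_central: "sc a * x = x * sc a" by transfer (rule FEq.scal_central)
lemma sc_0[simp]: "sc 0 = 0" by transfer (rule FEq.frefl)
lemma sc_1[simp]: "sc 1 = 1" by transfer (rule FEq.frefl)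
lemma sc_neg1: "sc (-1) * x = - x" by transfer (rule FEq.frefl)

lemma abs_Add[simp]: "abs_free (Add x y) = abs_free x + abs_free y" by (simp add: plus_free.abs_eq)
lemma abs_Mul[simp]: "abs_free (Mul x y) = abs_free x * abs_free y" by (simp add: times_free.abs_eq)
lemma abs_Scal[simp]: "abs_free (Scal c) = sc c" by (simp add: sc.abs_eq)



type_synonym 'k pl = "('k \<times> nat list) list"

definition evL :: "(nat \<Rightarrow> 'k::field free) \<Rightarrow> 'k pl \<Rightarrow> 'k free" where
  "evL \<sigma> xs = sum_list (map (\<lambda>(c,v). sc c * prod_list (map \<sigma> v)) xs)"
definition coeffL :: "'k::field pl \<Rightarrow> nat list \<Rightarrow> 'k" where
  "coeffL xs w = sum_list (map (\<lambda>(c,v). if v = w then c else 0) xs)"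
definition pv :: "nat \<Rightarrow> 'k::field pl" where "pv i = [(1,[i])]"
definition pmul :: "'k::field pl \<Rightarrow> 'k pl \<Rightarrow> 'k pl" (infixl "\<star>" 70) where
  "pmul xs ys = concat (map (\<lambda>(c,v). map (\<lambda>(d,u). (c*d, v@u)) ys) xs)"
definition psc :: "'k::field \<Rightarrow> 'k pl \<Rightarrow> 'k pl" where
  "psc c xs = map (\<lambda>(d,u). (c*d,u)) xs"
definition padd :: "'k::field pl \<Rightarrow> 'k pl \<Rightarrow> 'k pl" (infixl "\<oplus>" 65) where
  "padd xs ys = xs @ ys"
definition psub :: "'k::field pl \<Rightarrow> 'k pl \<Rightarrow> 'k pl" (infixl "\<ominus>" 65) where
  "psub xs ys = xs @ psc (-1) ys"

lemma sc_comm_prod: "sc c * x = x * sc c" by (rule sc_central)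

lemma evL_Nil[simp]: "evL \<sigma> [] = 0" by (simp add: evL_def)
lemma evL_Cons: "evL \<sigma> ((c,v)#xs) = sc c * prod_list (map \<sigma> v) + evL \<sigma> xs" by (simp add: evL_def)
lemma evL_append: "evL \<sigma> (xs @ ys) = evL \<sigma> xs + evL \<sigma> ys" by (simp add: evL_def)
lemma evL_padd[simp]: "evL \<sigma> (xs \<oplus> ys) = evL \<sigma> xs + evL \<sigma> ys" by (simp add: padd_def evL_append)
lemma sc_sc_comm: "sc a * (sc c * x) = sc c * (sc a * x)"
  by (simp add: mult.assoc[symmetric] sc_mult[symmetric] mult.commute)
lemma evL_psc[simp]: "evL \<sigma> (psc c xs) = sc c * evL \<sigma> xs"
proof (induction xs)
  case Nil then show ?case by (simp add: psc_def)
next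
  case (Cons a xs)
  obtain d u where a: "a = (d,u)" by fastforce
  show ?case using Cons by (simp add: a psc_def evL_Cons sc_mult distrib_left mult.assoc)
qed
lemma evL_psub[simp]: "evL \<sigma> (xs \<ominus> ys) = evL \<sigma> xs - evL \<sigma> ys"
  by (simp add: psub_def evL_append sc_neg1)
lemma evL_pv[simp]: "evL \<sigma> (pv i) = \<sigma> i" by (simp add: pv_def evL_def)

lemma evL_pmul_single: "evL \<sigma> (map (\<lambda>(d,u). (c*d, v@u)) ys) = sc c * prod_list (map \<sigma> v) * evL \<sigma> ys"
proof (induction ys)
  case Nil then show ?case by simp
next
  case (Cons a ys)
  obtain d u where a: "a = (d,u)" by fastforce
  have "sc (c*d) * prod_list (map \<sigma> (v@u)) = sc c * prod_list (map \<sigma> v) * (sc d * prod_list (map \<sigma> u))"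
  proof -
    have "prod_list (map \<sigma> v) * (sc d * prod_list (map \<sigma> u)) = sc d * (prod_list (map \<sigma> v) * prod_list (map \<sigma> u))"
      by (simp only: mult.assoc[symmetric] sc_central[of d "prod_list (map \<sigma> v)"])
    then show ?thesis by (simp add: sc_mult mult.assoc)
  qed
  then show ?case using Cons by (simp add: a evL_Cons algebra_simps)
qed

lemma evL_pmul[simp]: "evL \<sigma> (xs \<star> ys) = evL \<sigma> xs * evL \<sigma> ys"
proof (induction xs)
  case Nil then show ?case by (simp add: pmul_def)
next
  case (Cons a xs)
  obtain c v where a: "a = (c,v)" by fastforce
  have "(a#xs) \<star> ys = map (\<lambda>(d,u). (c*d, v@u)) ys @ (xs \<star> ys)" by (simp add: pmul_def a)
  then show ?case using Cons by (simp add: evL_append evL_pmul_single a evL_Cons distrib_right)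
qed

lemma coeffL_notin: "w \<notin> set (map snd xs) \<Longrightarrow> coeffL xs w = 0"
  by (induction xs) (auto simp: coeffL_def)

lemma coeffL_Cons: "coeffL ((c,v)#xs) w = (if v = w then c else 0) + coeffL xs w"
  by (simp add: coeffL_def)

lemma evL_sum: "evL \<sigma> xs = (\<Sum>w\<in>set (map snd xs). sc (coeffL xs w) * prod_list (map \<sigma> w))"
proof (induction xs)
  case Nil then show ?case by simp
next
  case (Cons a xs)
  obtain c v where a: "a = (c,v)" by fastforce
  let ?S = "set (map snd xs)"
  let ?f = "\<lambda>w. sc (coeffL xs w) * prod_list (map \<sigma> w)"
  let ?g = "\<lambda>w. sc (if v = w then c else 0) * prod_list (map \<sigma> w)"
  have "(\<Sum>w\<in>insert v ?S. sc (coeffL ((c,v)#xs) w) * prod_list (map \<sigma> w))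
      = (\<Sum>w\<in>insert v ?S. ?g w) + (\<Sum>w\<in>insert v ?S. ?f w)"
    by (simp add: coeffL_Cons sc_add distrib_right sum.distrib)
  also have "(\<Sum>w\<in>insert v ?S. ?g w) = sc c * prod_list (map \<sigma> v)"
    by (subst sum.remove[of _ v]) (auto intro!: sum.neutral split: if_splits)
  also have "(\<Sum>w\<in>insert v ?S. ?f w) = (\<Sum>w\<in>?S. ?f w)"
    by (cases "v \<in> ?S") (auto simp: insert_absorb coeffL_notin)
  finally show ?case using Cons by (simp add: a evL_Cons)
qed

lemma evL_coeff_eq:
  assumes "\<And>w. coeffL xs w = coeffL ys w"
  shows "evL \<sigma> xs = evL \<sigma> ys"
proof -
  let ?A = "set (map snd xs)" and ?B = "set (map snd ys)"
  have "evL \<sigma> xs = (\<Sum>w\<in>?A \<union> ?B. sc (coeffL xs w) * prod_list (map \<sigma> w))"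
    unfolding evL_sum by (rule sum.mono_neutral_left) (auto simp: coeffL_notin)
  also have "\<dots> = (\<Sum>w\<in>?A \<union> ?B. sc (coeffL ys w) * prod_list (map \<sigma> w))" using assms by simp
  also have "\<dots> = evL \<sigma> ys"
    unfolding evL_sum by (rule sum.mono_neutral_right) (auto simp: coeffL_notin)
  finally show ?thesis .
qed

lemma evL_coeff_eq2:
  assumes "\<forall>w\<in>set (map snd xs) \<union> set (map snd ys). coeffL xs w = coeffL ys w"
  shows "evL \<sigma> xs = evL \<sigma> ys"
  apply (rule evL_coeff_eq)
  using assms by (metis Un_iff coeffL_notin)

definition br :: "'k::field \<Rightarrow> 'k free \<Rightarrow> 'k free \<Rightarrow> 'k free" where
  "br q X Y = X * Y - sc (inverse q) * (Y * X)"
definition pbr :: "'k::field \<Rightarrow> 'k pl \<Rightarrow> 'k pl \<Rightarrow> 'k pl" where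
  "pbr q X Y = X \<star> Y \<ominus> psc (inverse q) (Y \<star> X)"
lemma evL_pbr[simp]: "evL \<sigma> (pbr q X Y) = br q (evL \<sigma> X) (evL \<sigma> Y)" by (simp add: pbr_def br_def)



definition PP :: "'k::field \<Rightarrow> 'k free \<Rightarrow> 'k free \<Rightarrow> 'k free" where
  "PP q x b = b*b*x - sc (q + inverse q) * (b*x*b) + x*b*b"
definition pPP :: "'k::field \<Rightarrow> 'k pl \<Rightarrow> 'k pl \<Rightarrow> 'k pl" where
  "pPP q x b = b\<star>b\<star>x \<ominus> psc (q + inverse q) (b\<star>x\<star>b) \<oplus> x\<star>b\<star>b"
lemma evL_pPP[simp]: "evL \<sigma> (pPP q X Y) = PP q (evL \<sigma> X) (evL \<sigma> Y)" by (simp add: pPP_def PP_def)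

lemma I6_ident:
  fixes a b c :: "'k::field free"
  assumes q: "q \<noteq> 0" and s: "q + inverse q \<noteq> 0"
  defines "p \<equiv> inverse q" and "t \<equiv> inverse q * inverse q * inverse (q + inverse q)"
  shows "br q (br q a b) c * b - b * br q (br q a b) c =
     sc p * (PP q a b * c) - sc p * (a * PP q c b) + sc p * ((a*c - c*a)*b*b) - sc p * (b*(a*c - c*a)*b)
     + sc t * (- (PP q a b * c) + a * PP q c b - (a*c - c*a)*b*b + b*b*(a*c - c*a) + PP q c b * a - c * PP q a b)"
proof -
  define \<sigma> where "\<sigma> = (\<lambda>i::nat. if i = 0 then a else if i = 1 then b else c)"
  let ?a = "pv 0 :: 'k pl" and ?b = "pv 1 :: 'k pl" and ?c = "pv 2 :: 'k pl"
  have "evL \<sigma> (pbr q (pbr q ?a ?b) ?c \<star> ?b \<ominus> ?b \<star> pbr q (pbr q ?a ?b) ?c) =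
    evL \<sigma> (psc p (pPP q ?a ?b \<star> ?c) \<ominus> psc p (?a \<star> pPP q ?c ?b) \<oplus> psc p ((?a\<star>?c \<ominus> ?c\<star>?a)\<star>?b\<star>?b) \<ominus> psc p (?b\<star>(?a\<star>?c \<ominus> ?c\<star>?a)\<star>?b)
     \<oplus> psc t (psc (-1) (pPP q ?a ?b \<star> ?c) \<oplus> ?a \<star> pPP q ?c ?b \<ominus> (?a\<star>?c \<ominus> ?c\<star>?a)\<star>?b\<star>?b \<oplus> ?b\<star>?b\<star>(?a\<star>?c \<ominus> ?c\<star>?a) \<oplus> pPP q ?c ?b \<star> ?a \<ominus> ?c \<star> pPP q ?a ?b))"
    apply (rule evL_coeff_eq2)
    apply (simp add: pbr_def pPP_def pmul_def psub_def padd_def psc_def pv_def coeffL_def)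
    using q s unfolding p_def t_def
    apply (auto simp: field_simps)
    apply (metis distrib_left mult_eq_0_iff mult.right_neutral)
    done
  then show ?thesis by (simp add: \<sigma>_def sc_neg1)
qed

lemma I1_ident:
  fixes z e b :: "'k::field free"
  shows "br q z e * b - b * br q z e = (z*b - b*z)*e + z*(e*b - b*e) - sc (inverse q) * ((e*b - b*e)*z) - sc (inverse q) * (e * (z*b - b*z))"
proof -
  define \<sigma> where "\<sigma> = (\<lambda>i::nat. if i = 0 then z else if i = 1 then e else b)"
  let ?z = "pv 0 :: 'k pl" and ?e = "pv 1 :: 'k pl" and ?b = "pv 2 :: 'k pl"
  have "evL \<sigma> (pbr q ?z ?e \<star> ?b \<ominus> ?b \<star> pbr q ?z ?e) = evL \<sigma> ((?z\<star>?b \<ominus> ?b\<star>?z)\<star>?e \<oplus> ?z\<star>(?e\<star>?b \<ominus> ?b\<star>?e) \<ominus> psc (inverse q) ((?e\<star>?b \<ominus> ?b\<star>?e)\<star>?z) \<ominus> psc (inverse q) (?e \<star> (?z\<star>?b \<ominus> ?b\<star>?z)))"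
    apply (rule evL_coeff_eq2)
    apply (simp add: pbr_def pmul_def psub_def padd_def psc_def pv_def coeffL_def)
    done
  then show ?thesis by (simp add: \<sigma>_def)
qed


lemma I4_ident:
  fixes z a b :: "'k::field free"
  assumes q: "q \<noteq> 0"
  defines "p \<equiv> inverse q" and "s \<equiv> q + inverse q"
  shows "PP q (br q z a) b = z*PP q a b - (z*b - b*z)*b*a - b*(z*b - b*z)*a + sc s*((z*b - b*z)*a*b)
     - sc p*(PP q a b*z) + sc p*(sc s*(b*a*(z*b - b*z))) - sc p*(a*b*(z*b - b*z)) - sc p*(a*(z*b - b*z)*b)"
proof -
  define \<sigma> where "\<sigma> = (\<lambda>i::nat. if i = 0 then z else if i = 1 then a else b)"
  let ?z = "pv 0 :: 'k pl" and ?a = "pv 1 :: 'k pl" and ?b = "pv 2 :: 'k pl"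
  let ?R = "?z\<star>?b \<ominus> ?b\<star>?z"
  have "evL \<sigma> (pPP q (pbr q ?z ?a) ?b) = evL \<sigma> (?z \<star> pPP q ?a ?b \<ominus> ?R\<star>?b\<star>?a \<ominus> ?b\<star>?R\<star>?a \<oplus> psc s (?R\<star>?a\<star>?b)
     \<ominus> psc p (pPP q ?a ?b \<star> ?z) \<oplus> psc p (psc s (?b\<star>?a\<star>?R)) \<ominus> psc p (?a\<star>?b\<star>?R) \<ominus> psc p (?a\<star>?R\<star>?b))"
    apply (rule evL_coeff_eq2)
    apply (simp add: pbr_def pPP_def pmul_def psub_def padd_def psc_def pv_def coeffL_def)
    using q unfolding p_def s_def
    apply (auto simp: field_simps)
    done
  then show ?thesis by (simp add: \<sigma>_def)
qed

lemma I5_ident: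
  fixes a b :: "'k::field free"
  assumes q: "q \<noteq> 0"
  shows "b * br q a b - sc (inverse q) * (br q a b * b) = sc (- inverse q) * PP q a b"
proof -
  define \<sigma> where "\<sigma> = (\<lambda>i::nat. if i = 0 then a else b)"
  let ?a = "pv 0 :: 'k pl" and ?b = "pv 1 :: 'k pl"
  have "evL \<sigma> (?b \<star> pbr q ?a ?b \<ominus> psc (inverse q) (pbr q ?a ?b \<star> ?b)) = evL \<sigma> (psc (- inverse q) (pPP q ?a ?b))"
    apply (rule evL_coeff_eq2)
    apply (simp add: pbr_def pPP_def pmul_def psub_def padd_def psc_def pv_def coeffL_def)
    using q
    apply (auto simp: field_simps)
    done
  then show ?thesis by (simp add: \<sigma>_def)
qed

lemma I3_ident:
  fixes a b :: "'k::field free"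
  assumes q: "q \<noteq> 0"
  shows "b * br q b a - sc q * (br q b a * b) = PP q a b"
proof -
  define \<sigma> where "\<sigma> = (\<lambda>i::nat. if i = 0 then a else b)"
  let ?a = "pv 0 :: 'k pl" and ?b = "pv 1 :: 'k pl"
  have "evL \<sigma> (?b \<star> pbr q ?b ?a \<ominus> psc q (pbr q ?b ?a \<star> ?b)) = evL \<sigma> (pPP q ?a ?b)"
    apply (rule evL_coeff_eq2)
    apply (simp add: pbr_def pPP_def pmul_def psub_def padd_def psc_def pv_def coeffL_def)
    using q
    apply (auto simp: field_simps)
    done
  then show ?thesis by (simp add: \<sigma>_def)
qed

lemma I2_ident:
  fixes z e :: "'k::field free"
  assumes q: "q \<noteq> 0"
  shows "e * z - sc q * (z * e) = sc (- q) * br q z e"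
proof -
  define \<sigma> where "\<sigma> = (\<lambda>i::nat. if i = 0 then z else e)"
  let ?z = "pv 0 :: 'k pl" and ?e = "pv 1 :: 'k pl"
  have "evL \<sigma> (?e \<star> ?z \<ominus> psc q (?z \<star> ?e)) = evL \<sigma> (psc (- q) (pbr q ?z ?e))"
    apply (rule evL_coeff_eq2)
    apply (simp add: pbr_def pmul_def psub_def padd_def psc_def pv_def coeffL_def)
    using q
    apply (auto simp: field_simps)
    done
  then show ?thesis by (simp add: \<sigma>_def)
qed



lemma abs_rep_free: "abs_free (rep_free X) = X"
  by (rule Quotient3_abs_rep[OF Quotient3_free])

definition ueq :: "nat \<Rightarrow> 'k::field \<Rightarrow> 'k free \<Rightarrow> 'k free \<Rightarrow> bool" where
  "ueq m q X Y \<longleftrightarrow> (\<exists>x y. X = abs_free x \<and> Y = abs_free y \<and> Ueq m q x y)"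

lemma ueq_abs: "ueq m q (abs_free x) (abs_free y) \<longleftrightarrow> Ueq m q x y"
proof
  assume "ueq m q (abs_free x) (abs_free y)"
  then obtain x' y' where "abs_free x = abs_free x'" "abs_free y = abs_free y'" "Ueq m q x' y'"
    by (auto simp: ueq_def)
  then have "FEq x x'" "FEq y y'" by (auto simp: free.abs_eq_iff)
  then show "Ueq m q x y" using \<open>Ueq m q x' y'\<close>
    by (meson FEq_Ueq Ueq.sym Ueq.trans)
qed (auto simp: ueq_def)

lemma ueq_cases: obtains x y where "X = abs_free x" "Y = abs_free y"
  by (metis abs_rep_free)

lemma ueq_refl[simp, intro]: "ueq m q X X"
  unfolding ueq_def by (rule exI[of _ "rep_free X"], rule exI[of _ "rep_free X"]) (simp add: abs_rep_free Ueq.refl)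
lemma ueq_eqI: "X = Y \<Longrightarrow> ueq m q X Y" by simp
lemma ueq_sym: "ueq m q X Y \<Longrightarrow> ueq m q Y X"
  unfolding ueq_def using Ueq.sym by blast
lemma ueq_trans: "ueq m q X Y \<Longrightarrow> ueq m q Y Z \<Longrightarrow> ueq m q X Z"
proof -
  assume a: "ueq m q X Y" "ueq m q Y Z"
  obtain x y where "X = abs_free x" "Y = abs_free y" by (rule ueq_cases)
  moreover obtain z where "Z = abs_free z" by (metis abs_rep_free)
  ultimately show ?thesis using a by (auto simp: ueq_abs intro: Ueq.trans)
qed
lemma ueq_add: "ueq m q X X' \<Longrightarrow> ueq m q Y Y' \<Longrightarrow> ueq m q (X + Y) (X' + Y')"
  unfolding ueq_def by (fastforce intro: Ueq.add_cong simp del: abs_Add simp add: abs_Add[symmetric])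
lemma ueq_mul: "ueq m q X X' \<Longrightarrow> ueq m q Y Y' \<Longrightarrow> ueq m q (X * Y) (X' * Y')"
  unfolding ueq_def by (fastforce intro: Ueq.mul_cong simp del: abs_Mul simp add: abs_Mul[symmetric])
lemma ueq_neg: "ueq m q X X' \<Longrightarrow> ueq m q (- X) (- X')"
  using ueq_mul[OF ueq_refl, of m q X X' "sc (-1)"] by (simp add: sc_neg1)
lemma ueq_diff: "ueq m q X X' \<Longrightarrow> ueq m q Y Y' \<Longrightarrow> ueq m q (X - Y) (X' - Y')"
  unfolding diff_conv_add_uminus by (rule ueq_add[OF _ ueq_neg])
lemma ueq_sc: "ueq m q X X' \<Longrightarrow> ueq m q (sc c * X) (sc c * X')"
  by (rule ueq_mul[OF ueq_refl])
lemma ueq_rel: "Urel m q x y \<Longrightarrow> ueq m q (abs_free x) (abs_free y)"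
  by (simp add: ueq_abs Ueq.rel)

lemma ueq_iff_diff: "ueq m q X Y \<longleftrightarrow> ueq m q (X - Y) 0"
proof
  assume "ueq m q X Y" then show "ueq m q (X - Y) 0"
    using ueq_diff[OF _ ueq_refl, of m q X Y Y] by simp
next
  assume "ueq m q (X - Y) 0"
  then have "ueq m q (X - Y + Y) (0 + Y)" by (rule ueq_add) simp
  then show "ueq m q X Y" by simp
qed

lemma ueq_sum_list: "(\<And>x. x \<in> set xs \<Longrightarrow> ueq m q (f x) (g x)) \<Longrightarrow>
   ueq m q (sum_list (map f xs)) (sum_list (map g xs))"
  by (induction xs) (auto intro: ueq_add)

definition Z0 :: "nat \<Rightarrow> 'k::field \<Rightarrow> 'k free \<Rightarrow> bool" where "Z0 m q X \<longleftrightarrow> ueq m q X 0"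

lemma Z0_add: "Z0 m q X \<Longrightarrow> Z0 m q Y \<Longrightarrow> Z0 m q (X + Y)"
  unfolding Z0_def using ueq_add by fastforce
lemma Z0_diff: "Z0 m q X \<Longrightarrow> Z0 m q Y \<Longrightarrow> Z0 m q (X - Y)"
  unfolding Z0_def using ueq_diff by fastforce
lemma Z0_neg: "Z0 m q X \<Longrightarrow> Z0 m q (- X)"
  unfolding Z0_def using ueq_neg by fastforce
lemma Z0_mult_left: "Z0 m q X \<Longrightarrow> Z0 m q (L * X)"
  unfolding Z0_def using ueq_mul[OF ueq_refl, of m q X 0 L] by simp
lemma Z0_mult_right: "Z0 m q X \<Longrightarrow> Z0 m q (X * R)"
  unfolding Z0_def using ueq_mul[OF _ ueq_refl, of m q X 0 R] by simp
lemma Z0_zero: "Z0 m q 0" by (simp add: Z0_def)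
lemmas Z0_rules = Z0_add Z0_diff Z0_neg Z0_mult_left Z0_mult_right Z0_zero

lemma Z0_iff: "Z0 m q (X - Y) \<longleftrightarrow> ueq m q X Y"
  by (simp add: Z0_def ueq_iff_diff[of m q X Y])

lemma sum_alpha:
  assumes "1 \<le> i" "i \<le> m"
  shows "(\<Sum>k=1..m+1. alpha i k * y k) = y i - y (i+1)"
proof -
  have "(\<Sum>k=1..m+1. alpha i k * y k) = (\<Sum>k=1..m+1. (if k = i then y k else 0) - (if k = i+1 then y k else 0))"
    by (rule sum.cong) (auto simp: alpha_def)
  also have "\<dots> = y i - y (i+1)" using assms by (simp add: sum_subtractf)
  finally show ?thesis .
qed

lemma ipr_alpha_left: "1 \<le> i \<Longrightarrow> i \<le> m \<Longrightarrow> ipr m (alpha i) y = y i - y (i+1)"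
  unfolding ipr_def by (rule sum_alpha)
lemma ipr_alpha_right: "1 \<le> i \<Longrightarrow> i \<le> m \<Longrightarrow> ipr m y (alpha i) = y i - y (i+1)"
proof -
  assume a: "1 \<le> i" "i \<le> m"
  have "ipr m y (alpha i) = (\<Sum>k=1..m+1. alpha i k * y k)" unfolding ipr_def
    by (rule sum.cong) (auto simp: mult.commute)
  then show ?thesis using sum_alpha[OF a] by simp
qed
lemma ipr_wneg_left: "ipr m (wneg x) y = - ipr m x y"
  by (simp add: ipr_def wneg_def sum_negf)
lemma ipr_wplus_right: "ipr m mu (wplus a b) = ipr m mu a + ipr m mu b"
  by (simp add: ipr_def wplus_def distrib_left sum.distrib)

lemma alpha_valid: "1 \<le> i \<Longrightarrow> i \<le> m \<Longrightarrow> in_root_lattice m (alpha i)"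
proof -
  assume a: "1 \<le> i" "i \<le> m"
  have "(\<Sum>k=1..m+1. alpha i k) = (\<Sum>k=1..m+1. alpha i k * (\<lambda>_. 1) k)" by simp
  also have "\<dots> = 0" by (subst sum_alpha[OF a]) simp
  finally show ?thesis using a by (auto simp: in_root_lattice_def alpha_def)
qed

lemma wneg_valid: "in_root_lattice m mu \<Longrightarrow> in_root_lattice m (wneg mu)"
  by (auto simp: in_root_lattice_def wneg_def sum_negf)
lemma wplus_valid:
  assumes a: "in_root_lattice m mu" and b: "in_root_lattice m la"
  shows "in_root_lattice m (wplus mu la)"
  unfolding in_root_lattice_def wplus_def
proof (rule conjI)
  show "\<forall>i. mu i + la i \<noteq> 0 \<longrightarrow> 1 \<le> i \<and> i \<le> m + 1"
  proof (intro allI impI)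
    fix i assume "mu i + la i \<noteq> 0"
    then have "mu i \<noteq> 0 \<or> la i \<noteq> 0" by auto
    then show "1 \<le> i \<and> i \<le> m + 1" using a b by (auto simp: in_root_lattice_def)
  qed
next
  show "(\<Sum>i = 1..m + 1. mu i + la i) = 0" using a b by (simp add: in_root_lattice_def sum.distrib)
qed
lemma zero_valid: "in_root_lattice m (\<lambda>_. 0)"
  by (auto simp: in_root_lattice_def)
lemma wneg_wneg[simp]: "wneg (wneg mu) = mu" by (simp add: wneg_def)
lemma wplus_wneg: "wplus mu (wneg mu) = (\<lambda>_. 0)" by (simp add: wplus_def wneg_def)
lemma wplus_wneg': "wplus (wneg mu) mu = (\<lambda>_. 0)" by (simp add: wplus_def wneg_def)
lemma wplus_comm: "wplus a b = wplus b a" by (auto simp: wplus_def)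

abbreviation eQ :: "nat \<Rightarrow> 'k::field free" where "eQ i \<equiv> abs_free (Gen (E i))"
abbreviation kQ :: "(nat \<Rightarrow> int) \<Rightarrow> 'k::field free" where "kQ mu \<equiv> abs_free (Gen (K mu))"

lemma abs_one[simp]: "abs_free (one :: 'k::field fexpr) = 1" by (simp add: one_def)
lemma abs_smult[simp]: "abs_free (smult c x) = sc c * abs_free x" by (simp add: smult_def)
lemma abs_sub[simp]: "abs_free (sub x y) = abs_free x - abs_free y"
  by (simp add: sub_def sc_neg1)
lemma abs_qbr[simp]: "abs_free (qbr q x y) = br q (abs_free x) (abs_free y)"
  by (simp add: qbr_def br_def)

lemma KK_Q: "in_root_lattice m mu \<Longrightarrow> in_root_lattice m la \<Longrightarrow> ueq m q (kQ mu * kQ la) (kQ (wplus mu la))"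
  using ueq_rel[OF Urel.KK, of m mu la q] by simp
lemma K0_Q: "ueq m q (kQ (\<lambda>_. 0)) 1"
  using ueq_rel[OF Urel.K0, of m q] by simp
lemma Kinv_Q: "in_root_lattice m mu \<Longrightarrow> ueq m q (kQ mu * kQ (wneg mu)) 1"
  using KK_Q[of m mu "wneg mu" q] K0_Q[of m q] wneg_valid[of m mu]
  by (simp add: wplus_wneg) (rule ueq_trans)
lemma Kinv'_Q: "in_root_lattice m mu \<Longrightarrow> ueq m q (kQ (wneg mu) * kQ mu) 1"
  using Kinv_Q[of m "wneg mu" q] wneg_valid[of m mu] by simp
lemma KE_Q: "in_root_lattice m mu \<Longrightarrow> 1 \<le> i \<Longrightarrow> i \<le> m \<Longrightarrow>
   ueq m q (kQ mu * eQ i) (sc (q powi ipr m mu (alpha i)) * (eQ i * kQ mu))"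
  using ueq_rel[OF Urel.KE, of m mu i q] by simp
lemma EEcomm_Q: "1 \<le> i \<Longrightarrow> i \<le> m \<Longrightarrow> 1 \<le> j \<Longrightarrow> j \<le> m \<Longrightarrow> ipr m (alpha i) (alpha j) \<in> {0, 2} \<Longrightarrow>
   ueq m q (eQ i * eQ j) (eQ j * eQ i)"
  using ueq_rel[OF Urel.EEcomm, of i m j q] by simp
lemma Serre_Q: "1 \<le> i \<Longrightarrow> i \<le> m \<Longrightarrow> 1 \<le> j \<Longrightarrow> j \<le> m \<Longrightarrow> ipr m (alpha i) (alpha j) = -1 \<Longrightarrow>
   ueq m q (eQ i * br q (eQ i) (eQ j)) (sc q * (br q (eQ i) (eQ j) * eQ i))"
  using ueq_rel[OF Urel.EEserre, of i m j q] by simp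


definition tQ :: "nat \<Rightarrow> 'k::field free \<Rightarrow> 'k \<times> 'k fexpr \<times> 'k fexpr \<Rightarrow> 'k free" where
  "tQ m U t = (case t of (c,h1,h2) \<Rightarrow> sc c * (abs_free h1 * U * abs_free (antipode m h2)))"

definition adQ :: "nat \<Rightarrow> 'k::field fexpr \<Rightarrow> 'k free \<Rightarrow> 'k free" where
  "adQ m h U = sum_list (map (tQ m U) (Delta m h))"

lemma abs_esum: "abs_free (esum xs) = sum_list (map abs_free xs)"
  by (induction xs) (simp_all add: esum_def)

lemma abs_ad: "abs_free (ad m h u) = adQ m h (abs_free u)"
  unfolding ad_def adQ_def abs_esum map_map
  by (rule arg_cong[where f=sum_list], rule map_cong) (auto simp: tQ_def)

lemma sc_left_comm: "a * (sc d * U) = sc d * (a * U)"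
  by (simp only: mult.assoc[symmetric] sc_central[of d a])

lemma tQ_add: "tQ m (U + V) = (\<lambda>t. tQ m U t + tQ m V t)"
  by (rule ext) (simp add: tQ_def split: prod.split, simp add: algebra_simps)
lemma tQ_sc: "tQ m (sc d * U) = (\<lambda>t. sc d * tQ m U t)"
proof (rule ext)
  fix t :: "'a \<times> 'a fexpr \<times> 'a fexpr"
  obtain c h1 h2 where t: "t = (c,h1,h2)" by (cases t) auto
  have "abs_free h1 * (sc d * U) * abs_free (antipode m h2) = sc d * (abs_free h1 * U * abs_free (antipode m h2))"
    by (simp only: mult.assoc sc_left_comm[of "abs_free h1" d])
  then show "tQ m (sc d * U) t = sc d * tQ m U t" by (simp add: tQ_def t sc_sc_comm)
qed
lemma tQ_zero: "tQ m 0 = (\<lambda>t. 0)"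
  by (rule ext) (simp add: tQ_def split: prod.split)

lemma adQ_add: "adQ m h (U + V) = adQ m h U + adQ m h V"
  by (simp add: adQ_def tQ_add sum_list_addf)
lemma adQ_sc: "adQ m h (sc d * U) = sc d * adQ m h U"
  by (simp add: adQ_def tQ_sc sum_list_const_mult)
lemma adQ_zero[simp]: "adQ m h 0 = 0"
  by (simp add: adQ_def tQ_zero)
lemma adQ_neg: "adQ m h (- U) = - adQ m h U"
  by (metis adQ_sc sc_neg1)
lemma adQ_diff: "adQ m h (U - V) = adQ m h U - adQ m h V"
  by (simp add: diff_conv_add_uminus adQ_add adQ_neg del: add_uminus_conv_diff)
lemma adQ_sum: "adQ m h (sum_list (map f xs)) = sum_list (map (\<lambda>x. adQ m h (f x)) xs)"
  by (induction xs) (simp_all add: adQ_add)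

lemma adQ_cong: "ueq m q U V \<Longrightarrow> ueq m q (adQ m' h U) (adQ m' h V)"
  unfolding adQ_def
  by (rule ueq_sum_list) (auto simp: tQ_def split: prod.split intro!: ueq_sc ueq_mul)

lemma sum_list_concat_map: "sum_list (map f (concat xss)) = sum_list (map (\<lambda>xs. sum_list (map f xs)) xss)"
  by (induction xss) simp_all

lemma adQ_Mul: "adQ m (Mul a b) U = adQ m a (adQ m b U)"
proof -
  have "adQ m (Mul a b) U = sum_list (map (\<lambda>(c, x1, x2). sum_list (map (\<lambda>(d, y1, y2). tQ m U (c*d, Mul x1 y1, Mul x2 y2)) (Delta m b))) (Delta m a))"
    unfolding adQ_def by (simp add: sum_list_concat_map map_map o_def case_prod_unfold)
  also have "\<dots> = sum_list (map (\<lambda>(c, x1, x2). sc c * (abs_free x1 * adQ m b U * abs_free (antipode m x2))) (Delta m a))"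
  proof (rule arg_cong[where f=sum_list], rule map_cong[OF HOL.refl])
    fix t assume "t \<in> set (Delta m a)"
    obtain c x1 x2 where t: "t = (c,x1,x2)" by (cases t) auto
    have "sum_list (map (\<lambda>(d, y1, y2). tQ m U (c*d, Mul x1 y1, Mul x2 y2)) (Delta m b))
        = sum_list (map (\<lambda>y. sc c * (abs_free x1 * tQ m U y * abs_free (antipode m x2))) (Delta m b))"
      by (rule arg_cong[where f=sum_list], rule map_cong[OF HOL.refl])
         (auto simp: tQ_def sc_mult mult.assoc sc_left_comm[of "abs_free x1"])
    also have "\<dots> = sc c * (abs_free x1 * adQ m b U * abs_free (antipode m x2))"
      unfolding adQ_def by (simp add: sum_list_const_mult sum_list_mult_const)
    finally show "(case t of (c, x1, x2) \<Rightarrow> sum_list (map (\<lambda>(d, y1, y2). tQ m U (c*d, Mul x1 y1, Mul x2 y2)) (Delta m b)))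
        = (case t of (c, x1, x2) \<Rightarrow> sc c * (abs_free x1 * adQ m b U * abs_free (antipode m x2)))"
      by (simp add: t)
  qed
  also have "\<dots> = adQ m a (adQ m b U)"
    unfolding adQ_def by (rule arg_cong[where f=sum_list], rule map_cong) (auto simp: tQ_def)
  finally show ?thesis .
qed

lemma adQ_Add: "adQ m (Add a b) U = adQ m a U + adQ m b U"
  by (simp add: adQ_def)

lemma adQ_Scal: "adQ m (Scal c) U = sc c * U"
  by (simp add: adQ_def tQ_def one_def)

lemma adQ_E: "1 \<le> i \<Longrightarrow> i \<le> m \<Longrightarrow>
   adQ m (Gen (E i)) U = eQ i * U - kQ (wneg (alpha i)) * U * kQ (alpha i) * eQ i"
  by (simp add: adQ_def tQ_def Delta_gen_def valid_gen_def antipode_gen_def one_def sc_neg1 mult.assoc)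

lemma adQ_K: "in_root_lattice m mu \<Longrightarrow> adQ m (Gen (K mu)) U = kQ mu * U * kQ (wneg mu)"
  by (simp add: adQ_def tQ_def Delta_gen_def valid_gen_def antipode_gen_def)

lemma piA_E1: "piA (Gen (E 1)) = Scal 0" by simp
lemma piA_gen: "g \<noteq> E 1 \<Longrightarrow> piA (Gen g) = Gen g" by simp



lemmas [trans] = ueq_trans

lemma foldr_Tl_Mul[simp]: "foldr (Tl m q) ks (Mul x y) = Mul (foldr (Tl m q) ks x) (foldr (Tl m q) ks y)"
  by (induction ks) auto
lemma foldr_Tl_Add[simp]: "foldr (Tl m q) ks (Add x y) = Add (foldr (Tl m q) ks x) (foldr (Tl m q) ks y)"
  by (induction ks) auto
lemma foldr_Tl_Scal[simp]: "foldr (Tl m q) ks (Scal c) = Scal c"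
  by (induction ks) auto
lemma foldr_Tl_qbr: "foldr (Tl m q) ks (qbr q x y) = qbr q (foldr (Tl m q) ks x) (foldr (Tl m q) ks y)"
  by (simp add: qbr_def sub_def smult_def)

lemma foldr_Tl_E_fix:
  assumes "J \<le> m" "\<forall>k\<in>set ks. 1 \<le> k \<and> k + 1 < J"
  shows "foldr (Tl m q) ks (Gen (E J)) = Gen (E J)"
  using assms(2)
proof (induction ks)
  case Nil then show ?case by simp
next
  case (Cons k ks)
  then have k: "1 \<le> k" "k + 1 < J" by auto
  have "ipr m (alpha k) (alpha J) = 0"
    using k assms(1) by (subst ipr_alpha_left) (auto simp: alpha_def)
  then have "Tl m q k (Gen (E J)) = Gen (E J)"
    using k assms(1) by (simp add: T_gen_def)
  then show ?case using Cons by simp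
qed

lemma T_step: "1 \<le> j \<Longrightarrow> j + 1 \<le> m \<Longrightarrow> Tl m q j (Gen (E (Suc j))) = qbr q (Gen (E j)) (Gen (E (Suc j)))"
proof -
  assume a: "1 \<le> j" "j + 1 \<le> m"
  have "ipr m (alpha j) (alpha (Suc j)) = -1" using a by (subst ipr_alpha_left) (auto simp: alpha_def)
  then show ?thesis using a by (simp add: T_gen_def qbr_def)
qed

lemma zgen_1: "zgen m q 1 = Gen (E 1)" by (simp add: zgen_def)

lemma zgen_Suc: "1 \<le> j \<Longrightarrow> j + 1 \<le> m \<Longrightarrow> zgen m q (Suc j) = qbr q (zgen m q j) (Gen (E (Suc j)))"
proof -
  assume a: "1 \<le> j" "j + 1 \<le> m"
  have "[1..<Suc j] = [1..<j] @ [j]" using a by simp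
  then have "zgen m q (Suc j) = foldr (Tl m q) [1..<j] (Tl m q j (Gen (E (Suc j))))"
    by (simp add: zgen_def)
  also have "\<dots> = qbr q (zgen m q j) (foldr (Tl m q) [1..<j] (Gen (E (Suc j))))"
    using a by (simp only: T_step foldr_Tl_qbr zgen_def)
  also have "foldr (Tl m q) [1..<j] (Gen (E (Suc j))) = Gen (E (Suc j))"
    using a by (intro foldr_Tl_E_fix) auto
  finally show ?thesis .
qed

abbreviation ZQ :: "nat \<Rightarrow> 'k::field \<Rightarrow> nat \<Rightarrow> 'k free" where "ZQ m q j \<equiv> abs_free (zgen m q j)"

lemma ZQ_1: "ZQ m q 1 = eQ 1" by (simp add: zgen_def)
lemma ZQ_Suc: "1 \<le> j \<Longrightarrow> j + 1 \<le> m \<Longrightarrow> ZQ m q (Suc j) = br q (ZQ m q j) (eQ (Suc j))"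
  by (simp add: zgen_Suc)

definition hom :: "nat \<Rightarrow> 'k::field \<Rightarrow> 'k free \<Rightarrow> (nat \<Rightarrow> int) \<Rightarrow> bool" where
  "hom m q X \<beta> \<longleftrightarrow> (\<forall>mu. in_root_lattice m mu \<longrightarrow> ueq m q (kQ mu * X) (sc (q powi ipr m mu \<beta>) * (X * kQ mu)))"

lemma hom_E: "1 \<le> i \<Longrightarrow> i \<le> m \<Longrightarrow> hom m q (eQ i) (alpha i)"
  by (simp add: hom_def KE_Q)

lemma hom_mul:
  assumes q: "q \<noteq> 0" and X: "hom m q X a" and Y: "hom m q Y b"
  shows "hom m q (X * Y) (wplus a b)"
  unfolding hom_def
proof (intro allI impI)
  fix mu assume mu: "in_root_lattice m mu"
  let ?s = "q powi ipr m mu a" and ?t = "q powi ipr m mu b" and ?k = "kQ mu :: 'a free"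
  have "ueq m q (?k * X * Y) (sc ?s * (X * ?k) * Y)"
    by (rule ueq_mul[OF _ ueq_refl]) (use X mu in \<open>simp add: hom_def\<close>)
  then have "ueq m q (?k * (X * Y)) (sc ?s * (X * ?k) * Y)" by (simp add: mult.assoc)
  also have "sc ?s * (X * ?k) * Y = sc ?s * (X * (?k * Y))" by (simp add: mult.assoc)
  also have "ueq m q \<dots> (sc ?s * (X * (sc ?t * (Y * ?k))))"
    using Y mu unfolding hom_def by (auto intro: ueq_mul)
  also have "sc ?s * (X * (sc ?t * (Y * ?k))) = sc (q powi ipr m mu (wplus a b)) * (X * Y * ?k)"
    using q by (simp add: ipr_wplus_right power_int_add sc_mult mult.assoc sc_left_comm[of X])
  finally show "ueq m q (?k * (X * Y)) (sc (q powi ipr m mu (wplus a b)) * (X * Y * ?k))" .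
qed

lemma hom_sc: "hom m q X a \<Longrightarrow> hom m q (sc c * X) a"
  unfolding hom_def
proof (intro allI impI)
  fix mu assume X: "\<forall>mu. in_root_lattice m mu \<longrightarrow> ueq m q (kQ mu * X) (sc (q powi ipr m mu a) * (X * kQ mu))"
    and mu: "in_root_lattice m mu"
  have "kQ mu * (sc c * X) = sc c * (kQ mu * X)" by (rule sc_left_comm)
  also have "ueq m q \<dots> (sc c * (sc (q powi ipr m mu a) * (X * kQ mu)))"
    using X mu by (auto intro: ueq_sc)
  also have "sc c * (sc (q powi ipr m mu a) * (X * kQ mu)) = sc (q powi ipr m mu a) * (sc c * X * kQ mu)"
    by (simp add: sc_sc_comm mult.assoc)
  finally show "ueq m q (kQ mu * (sc c * X)) (sc (q powi ipr m mu a) * (sc c * X * kQ mu))" .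
qed

lemma hom_diff: "hom m q X a \<Longrightarrow> hom m q Y a \<Longrightarrow> hom m q (X - Y) a"
  unfolding hom_def
proof (intro allI impI)
  fix mu assume X: "\<forall>mu. in_root_lattice m mu \<longrightarrow> ueq m q (kQ mu * X) (sc (q powi ipr m mu a) * (X * kQ mu))"
    and Y: "\<forall>mu. in_root_lattice m mu \<longrightarrow> ueq m q (kQ mu * Y) (sc (q powi ipr m mu a) * (Y * kQ mu))"
    and mu: "in_root_lattice m mu"
  have "kQ mu * (X - Y) = kQ mu * X - kQ mu * Y" by (simp add: right_diff_distrib)
  also have "ueq m q \<dots> (sc (q powi ipr m mu a) * (X * kQ mu) - sc (q powi ipr m mu a) * (Y * kQ mu))"
    using X Y mu by (auto intro: ueq_diff)
  also have "sc (q powi ipr m mu a) * (X * kQ mu) - sc (q powi ipr m mu a) * (Y * kQ mu) = sc (q powi ipr m mu a) * ((X - Y) * kQ mu)"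
    by (simp add: right_diff_distrib left_diff_distrib)
  finally show "ueq m q (kQ mu * (X - Y)) (sc (q powi ipr m mu a) * ((X - Y) * kQ mu))" .
qed

lemma hom_br: "q \<noteq> 0 \<Longrightarrow> hom m q X a \<Longrightarrow> hom m q Y b \<Longrightarrow> hom m q (br q X Y) (wplus a b)"
  unfolding br_def by (metis hom_diff hom_mul hom_sc wplus_comm)

definition zw :: "nat \<Rightarrow> nat \<Rightarrow> int" where
  "zw j = (\<lambda>k. if k = 1 then 1 else if k = j + 1 then -1 else 0)"

lemma hom_Z: assumes q: "q \<noteq> 0" shows "1 \<le> j \<Longrightarrow> j \<le> m \<Longrightarrow> hom m q (ZQ m q j) (zw j)"
proof (induction j rule: nat_induct_at_least)
  case base
  have "zw 1 = alpha 1" by (auto simp: zw_def alpha_def)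
  moreover have "hom m q (eQ 1) (alpha 1)" using base by (intro hom_E) auto
  ultimately show ?case by (simp add: zgen_def)
next
  case (Suc j)
  have w: "wplus (zw j) (alpha (Suc j)) = zw (Suc j)"
    using Suc by (auto simp: zw_def alpha_def wplus_def)
  have "hom m q (br q (ZQ m q j) (eQ (Suc j))) (wplus (zw j) (alpha (Suc j)))"
    using Suc q by (intro hom_br hom_E) auto
  then show ?case using Suc w
    by (simp add: ZQ_Suc)
qed

lemma conj_hom:
  assumes X: "hom m q X \<beta>" and mu: "in_root_lattice m mu"
  shows "ueq m q (kQ mu * X * kQ (wneg mu)) (sc (q powi ipr m mu \<beta>) * X)"
proof -
  have "ueq m q (kQ mu * X * kQ (wneg mu)) (sc (q powi ipr m mu \<beta>) * (X * kQ mu) * kQ (wneg mu))"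
    using X mu unfolding hom_def by (auto intro: ueq_mul)
  also have "sc (q powi ipr m mu \<beta>) * (X * kQ mu) * kQ (wneg mu) = sc (q powi ipr m mu \<beta>) * (X * (kQ mu * kQ (wneg mu)))"
    by (simp add: mult.assoc)
  also have "ueq m q \<dots> (sc (q powi ipr m mu \<beta>) * (X * 1))"
    by (intro ueq_sc ueq_mul[OF ueq_refl] Kinv_Q mu)
  finally show ?thesis by simp
qed

lemma adQ_E_hom:
  assumes "1 \<le> i" "i \<le> m" "hom m q X \<beta>"
  shows "ueq m q (adQ m (Gen (E i)) X) (eQ i * X - sc (q powi ipr m (wneg (alpha i)) \<beta>) * (X * eQ i))"
proof -
  have v: "in_root_lattice m (wneg (alpha i))" using assms by (simp add: alpha_valid wneg_valid)
  have "ueq m q (kQ (wneg (alpha i)) * X * kQ (alpha i)) (sc (q powi ipr m (wneg (alpha i)) \<beta>) * X)"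
    using conj_hom[OF assms(3) v] by simp
  then have "ueq m q (kQ (wneg (alpha i)) * X * kQ (alpha i) * eQ i) (sc (q powi ipr m (wneg (alpha i)) \<beta>) * X * eQ i)"
    by (auto intro: ueq_mul)
  then show ?thesis using assms by (simp add: adQ_E mult.assoc) (auto intro: ueq_diff)
qed



lemma ZQ_1'[simp]: "ZQ m q (Suc 0) = eQ (Suc 0)" by (simp add: zgen_def)


lemmas Z0_intros = Z0_add Z0_diff Z0_mult_left Z0_mult_right

lemma I1_Z0:
  assumes "Z0 m q (z*b - b*z)" "Z0 m q (e*b - b*e)"
  shows "Z0 m q (br q z e * b - b * br q z e)"
proof -
  have "\<And>R1 R2. Z0 m q R1 \<Longrightarrow> Z0 m q R2 \<Longrightarrow>
     Z0 m q (R1 * e + z * R2 - sc (inverse q) * (R2 * z) - sc (inverse q) * (e * R1))"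
    by (blast intro: Z0_intros)
  from this[OF assms] show ?thesis unfolding I1_ident .
qed

lemma I4_Z0:
  assumes q: "q \<noteq> 0" and "Z0 m q (z*b - b*z)" "Z0 m q (PP q a b)"
  shows "Z0 m q (PP q (br q z a) b)"
proof -
  have "\<And>R P s p. Z0 m q R \<Longrightarrow> Z0 m q P \<Longrightarrow>
     Z0 m q (z*P - R*b*a - b*R*a + sc s*(R*a*b) - sc p*(P*z) + sc p*(sc s*(b*a*R)) - sc p*(a*b*R) - sc p*(a*R*b))"
    by (blast intro: Z0_intros)
  from this[OF assms(2,3)] show ?thesis unfolding I4_ident[OF q] .
qed

lemma I6_Z0:
  assumes q: "q \<noteq> 0" and s: "q + inverse q \<noteq> 0"
    and "Z0 m q (PP q a b)" "Z0 m q (PP q c b)" "Z0 m q (a*c - c*a)"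
  shows "Z0 m q (br q (br q a b) c * b - b * br q (br q a b) c)"
proof -
  have "\<And>Pa Pc A p t. Z0 m q Pa \<Longrightarrow> Z0 m q Pc \<Longrightarrow> Z0 m q A \<Longrightarrow>
     Z0 m q (sc p * (Pa * c) - sc p * (a * Pc) + sc p * (A*b*b) - sc p * (b*A*b)
     + sc t * (- (Pa * c) + a * Pc - A*b*b + b*b*A + Pc * a - c * Pa))"
    by (intro Z0_add Z0_diff; (intro Z0_mult_left Z0_mult_right Z0_neg)?; blast intro: Z0_intros Z0_neg)
  from this[OF assms(3,4,5)] show ?thesis unfolding I6_ident[OF q s] .
qed

lemma EEcomm_Z0: "1 \<le> i \<Longrightarrow> i \<le> m \<Longrightarrow> 1 \<le> j \<Longrightarrow> j \<le> m \<Longrightarrow> i + 1 < j \<or> j + 1 < i \<Longrightarrow>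
   Z0 m q (eQ i * eQ j - eQ j * eQ i)"
proof -
  assume a: "1 \<le> i" "i \<le> m" "1 \<le> j" "j \<le> m" "i + 1 < j \<or> j + 1 < i"
  have "ipr m (alpha i) (alpha j) = 0" using a by (subst ipr_alpha_left) (auto simp: alpha_def)
  then show ?thesis using EEcomm_Q[of i m j q] a by (simp add: Z0_iff)
qed

lemma Serre_PP: "1 \<le> i \<Longrightarrow> i \<le> m \<Longrightarrow> 1 \<le> k \<Longrightarrow> k \<le> m \<Longrightarrow> ipr m (alpha i) (alpha k) = -1 \<Longrightarrow> q \<noteq> 0 \<Longrightarrow>
   Z0 m q (PP q (eQ k) (eQ i))"
  using Serre_Q[of i m k q] I3_ident[of q "eQ i" "eQ k"] by (simp add: Z0_iff[symmetric])

lemma Z_comm_low: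
  assumes im: "i \<le> m"
  shows "1 \<le> j \<Longrightarrow> j + 1 < i \<Longrightarrow> Z0 m q (ZQ m q j * eQ i - eQ i * ZQ m q j)"
proof (induction j rule: nat_induct_at_least)
  case base
  then show ?case using EEcomm_Z0[of 1 m i q] im by simp
next
  case (Suc j)
  have R1: "Z0 m q (ZQ m q j * eQ i - eQ i * ZQ m q j)" using Suc by simp
  have R2: "Z0 m q (eQ (Suc j) * eQ i - eQ i * eQ (Suc j))" using Suc im by (intro EEcomm_Z0) auto
  have Zs: "ZQ m q (Suc j) = br q (ZQ m q j) (eQ (Suc j))" using Suc im by (intro ZQ_Suc) auto
  show ?case unfolding Zs using R1 R2 by (rule I1_Z0)
qed

lemma Z_PP:
  assumes q: "q \<noteq> 0" and j: "1 \<le> j" "j + 1 \<le> m"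
  shows "Z0 m q (PP q (ZQ m q j) (eQ (Suc j)))"
proof (cases "j = 1")
  case True
  have "ipr m (alpha 2) (alpha 1) = -1" using j by (subst ipr_alpha_left) (auto simp: alpha_def)
  then show ?thesis using True Serre_PP[of 2 m 1 q] j q by (simp add: numeral_2_eq_2)
next
  case False
  then obtain j' where j': "j = Suc j'" "1 \<le> j'" using j by (cases j) auto
  have Z: "ZQ m q j = br q (ZQ m q j') (eQ j)" using j j' by (simp add: ZQ_Suc)
  have "ipr m (alpha (Suc j)) (alpha j) = -1" using j by (subst ipr_alpha_left) (auto simp: alpha_def)
  then have P: "Z0 m q (PP q (eQ j) (eQ (Suc j)))" using Serre_PP[of "Suc j" m j q] j q by simp
  have R: "Z0 m q (ZQ m q j' * eQ (Suc j) - eQ (Suc j) * ZQ m q j')"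
    using Z_comm_low[of "Suc j" m j' q] j j' by simp
  show ?thesis unfolding Z using q R P by (rule I4_Z0)
qed

lemma Z_comm_high:
  assumes q: "q \<noteq> 0" and s: "q + inverse q \<noteq> 0" and i: "2 \<le> i"
  shows "i + 1 \<le> j \<Longrightarrow> j \<le> m \<Longrightarrow> Z0 m q (ZQ m q j * eQ i - eQ i * ZQ m q j)"
proof (induction j rule: nat_induct_at_least)
  case base
  obtain i' where i': "i = Suc i'" "1 \<le> i'" using i by (cases i) auto
  have Z1: "ZQ m q (i + 1) = br q (ZQ m q i) (eQ (Suc i))" using base i by (simp add: ZQ_Suc)
  have Z2: "ZQ m q i = br q (ZQ m q i') (eQ i)" using base i' by (simp add: ZQ_Suc)
  have Pa: "Z0 m q (PP q (ZQ m q i') (eQ i))" using Z_PP[OF q, of i' m] i' base by simp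
  have "ipr m (alpha i) (alpha (Suc i)) = -1" using base i by (subst ipr_alpha_left) (auto simp: alpha_def)
  then have Pc: "Z0 m q (PP q (eQ (Suc i)) (eQ i))" using Serre_PP[of i m "Suc i" q] base i q by simp
  have A: "Z0 m q (ZQ m q i' * eQ (Suc i) - eQ (Suc i) * ZQ m q i')"
    using Z_comm_low[of "Suc i" m i' q] base i' by simp
  show ?case unfolding Z1 Z2 using q s Pa Pc A by (rule I6_Z0)
next
  case (Suc j)
  have R1: "Z0 m q (ZQ m q j * eQ i - eQ i * ZQ m q j)" using Suc by simp
  have R2: "Z0 m q (eQ (Suc j) * eQ i - eQ i * eQ (Suc j))" using Suc i by (intro EEcomm_Z0) auto
  have Zs: "ZQ m q (Suc j) = br q (ZQ m q j) (eQ (Suc j))" using Suc i by (intro ZQ_Suc) auto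
  show ?case unfolding Zs using R1 R2 by (rule I1_Z0)
qed



lemma zw_i: "2 \<le> i \<Longrightarrow> i \<le> m \<Longrightarrow>
  ipr m (wneg (alpha i)) (zw j) = (if i = j + 1 then 1 else 0) - (if i = j then 1 else 0)"
  by (simp add: ipr_wneg_left ipr_alpha_left zw_def)

definition Cm :: "nat \<Rightarrow> 'k::field \<Rightarrow> 'k free set" where
  "Cm m q = {X. \<exists>v\<in>Ucm m q. ueq m q X (abs_free v)}"

lemma Cm_ueq: "ueq m q X Y \<Longrightarrow> Y \<in> Cm m q \<Longrightarrow> X \<in> Cm m q"
  unfolding Cm_def using ueq_trans by blast
lemma Cm_abs: "v \<in> Ucm m q \<Longrightarrow> abs_free v \<in> Cm m q"
  unfolding Cm_def by blast
lemma Cm_add: "X \<in> Cm m q \<Longrightarrow> Y \<in> Cm m q \<Longrightarrow> X + Y \<in> Cm m q"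
proof -
  assume "X \<in> Cm m q" "Y \<in> Cm m q"
  then obtain v w where "v \<in> Ucm m q" "w \<in> Ucm m q" "ueq m q X (abs_free v)" "ueq m q Y (abs_free w)"
    unfolding Cm_def by blast
  then have "Add v w \<in> Ucm m q" "ueq m q (X + Y) (abs_free (Add v w))"
    by (auto simp: Ucm_def intro: subalg.add ueq_add)
  then show ?thesis unfolding Cm_def by blast
qed
lemma Cm_mul: "X \<in> Cm m q \<Longrightarrow> Y \<in> Cm m q \<Longrightarrow> X * Y \<in> Cm m q"
proof -
  assume "X \<in> Cm m q" "Y \<in> Cm m q"
  then obtain v w where "v \<in> Ucm m q" "w \<in> Ucm m q" "ueq m q X (abs_free v)" "ueq m q Y (abs_free w)"
    unfolding Cm_def by blast
  then have "Mul v w \<in> Ucm m q" "ueq m q (X * Y) (abs_free (Mul v w))"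
    by (auto simp: Ucm_def intro: subalg.mul ueq_mul)
  then show ?thesis unfolding Cm_def by blast
qed
lemma Cm_scal: "sc c \<in> Cm m q"
  using Cm_abs[of "Scal c" m q] by (simp add: Ucm_def subalg.scal)
lemma Cm_sc: "X \<in> Cm m q \<Longrightarrow> sc c * X \<in> Cm m q"
  by (rule Cm_mul[OF Cm_scal])
lemma Cm_zero: "0 \<in> Cm m q"
  using Cm_scal[of 0 m q] by simp
lemma Cm_one: "1 \<in> Cm m q"
  using Cm_scal[of 1 m q] by simp
lemma Cm_Z0: "Z0 m q X \<Longrightarrow> X \<in> Cm m q"
  unfolding Z0_def using Cm_ueq Cm_zero by blast
lemma Cm_ZQ: "1 \<le> j \<Longrightarrow> j \<le> m \<Longrightarrow> ZQ m q j \<in> Cm m q"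
  by (rule Cm_abs) (auto simp: Ucm_def intro: subalg.gen)

lemma adQ_E_Z:
  assumes q: "q \<noteq> 0" and s: "q + inverse q \<noteq> 0" and i: "2 \<le> i" "i \<le> m" and j: "1 \<le> j" "j \<le> m"
  shows "adQ m (Gen (E i)) (ZQ m q j) \<in> Cm m q"
proof -
  have h: "ueq m q (adQ m (Gen (E i)) (ZQ m q j))
     (eQ i * ZQ m q j - sc (q powi ((if i = j + 1 then 1 else 0) - (if i = j then 1 else 0))) * (ZQ m q j * eQ i))"
    using adQ_E_hom[of i m q "ZQ m q j" "zw j"] hom_Z[OF q j] i by (simp add: zw_i)
  show ?thesis
  proof (cases "j + 1 < i")
    case True
    then have "Z0 m q (ZQ m q j * eQ i - eQ i * ZQ m q j)" using Z_comm_low[OF i(2)] j by simp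
    then have "Z0 m q (eQ i * ZQ m q j - ZQ m q j * eQ i)" using Z0_neg by fastforce
    then show ?thesis using h True by (auto intro: Cm_ueq Cm_Z0)
  next
    case False
    show ?thesis
    proof (cases "j + 1 = i")
      case True
      have "ZQ m q i = br q (ZQ m q j) (eQ i)" using ZQ_Suc[of j m q] True j i by simp
      then have "eQ i * ZQ m q j - sc q * (ZQ m q j * eQ i) = sc (- q) * ZQ m q i"
        by (simp add: I2_ident[OF q])
      then show ?thesis using h True Cm_sc[OF Cm_ZQ[of i m q]] i by (auto intro: Cm_ueq)
    next
      case False2: False
      show ?thesis
      proof (cases "j = i")
        case True
        obtain i' where i': "i = Suc i'" "1 \<le> i'" using i by (cases i) auto
        have Zi: "ZQ m q i = br q (ZQ m q i') (eQ i)" using i i' by (simp add: ZQ_Suc)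
        have P: "Z0 m q (PP q (ZQ m q i') (eQ i))" using Z_PP[OF q, of i' m] i i' by simp
        have "eQ i * ZQ m q j - sc (q powi (-1)) * (ZQ m q j * eQ i) = sc (- inverse q) * PP q (ZQ m q i') (eQ i)"
          using True by (simp add: Zi I5_ident[OF q] power_int_minus)
        then show ?thesis using h True P by (auto intro: Cm_ueq Cm_Z0 Z0_mult_left)
      next
        case False3: False
        then have "i + 1 \<le> j" using False False2 by simp
        then have "Z0 m q (ZQ m q j * eQ i - eQ i * ZQ m q j)" using Z_comm_high[OF q s i(1)] j by simp
        then have "Z0 m q (eQ i * ZQ m q j - ZQ m q j * eQ i)" using Z0_neg by fastforce
        then show ?thesis using h False False2 False3 by (auto intro: Cm_ueq Cm_Z0)
      qed
    qed
  qed
qed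

lemma adQ_K_mul:
  assumes mu: "in_root_lattice m mu"
  shows "ueq m q (adQ m (Gen (K mu)) (V * W)) (adQ m (Gen (K mu)) V * adQ m (Gen (K mu)) W)"
proof -
  have "adQ m (Gen (K mu)) V * adQ m (Gen (K mu)) W = kQ mu * V * (kQ (wneg mu) * kQ mu) * W * kQ (wneg mu)"
    using mu by (simp add: adQ_K mult.assoc)
  also have "ueq m q \<dots> (kQ mu * V * 1 * W * kQ (wneg mu))"
    by (intro ueq_mul ueq_refl Kinv'_Q mu)
  finally show ?thesis using mu by (simp add: adQ_K mult.assoc ueq_sym)
qed

lemma Ucm_induct_Cm:
  assumes v: "v \<in> Ucm m q"
    and hs: "\<And>c. FF (sc c) \<in> Cm m q"
    and hg: "\<And>j. 1 \<le> j \<Longrightarrow> j \<le> m \<Longrightarrow> FF (ZQ m q j) \<in> Cm m q"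
    and ha: "\<And>V W. FF V \<in> Cm m q \<Longrightarrow> FF W \<in> Cm m q \<Longrightarrow> FF (V + W) \<in> Cm m q"
    and hm: "\<And>V W. FF V \<in> Cm m q \<Longrightarrow> FF W \<in> Cm m q \<Longrightarrow> V \<in> Cm m q \<Longrightarrow> W \<in> Cm m q \<Longrightarrow> FF (V * W) \<in> Cm m q"
  shows "FF (abs_free v) \<in> Cm m q"
  using v unfolding Ucm_def
proof (induction v rule: subalg.induct)
  case (scal c) then show ?case using hs by simp
next
  case (gen x) then show ?case using hg by auto
next
  case (add x y) then show ?case using ha by simp
next
  case (mul x y) then show ?case using hm Cm_abs[of x m q] Cm_abs[of y m q] by (simp add: Ucm_def)
qed

lemma Cm_adQ_cong:
  assumes "\<And>v. v \<in> Ucm m q \<Longrightarrow> adQ m h (abs_free v) \<in> Cm m q" and "V \<in> Cm m q"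
  shows "adQ m h V \<in> Cm m q"
proof -
  obtain v where "v \<in> Ucm m q" "ueq m q V (abs_free v)" using assms(2) unfolding Cm_def by blast
  then show ?thesis using assms(1) adQ_cong Cm_ueq by blast
qed

lemma adQ_K_Cm:
  fixes q :: "'k::field"
  assumes q: "q \<noteq> 0" and mu: "in_root_lattice m mu" and V: "V \<in> Cm m q"
  shows "adQ m (Gen (K mu)) V \<in> Cm m q"
proof (rule Cm_adQ_cong[OF _ V])
  fix v assume v: "v \<in> Ucm m q"
  show "adQ m (Gen (K mu)) (abs_free v) \<in> Cm m q"
  proof (rule Ucm_induct_Cm[OF v])
    fix c
    have "adQ m (Gen (K mu)) (sc c :: 'k free) = sc c * (kQ mu * kQ (wneg mu))"
      using mu by (simp add: adQ_K mult.assoc sc_left_comm[of "kQ mu"])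
    also have "ueq m q \<dots> (sc c * (1::'k free))" by (intro ueq_sc Kinv_Q mu)
    finally show "adQ m (Gen (K mu)) (sc c) \<in> Cm m q" using Cm_scal by (auto intro: Cm_ueq)
  next
    fix j assume j: "1 \<le> j" "j \<le> m"
    have "ueq m q (adQ m (Gen (K mu)) (ZQ m q j)) (sc (q powi ipr m mu (zw j)) * ZQ m q j)"
      using conj_hom[OF hom_Z[OF q j] mu] mu by (simp add: adQ_K)
    then show "adQ m (Gen (K mu)) (ZQ m q j) \<in> Cm m q" using Cm_sc[OF Cm_ZQ[OF j]] by (blast intro: Cm_ueq)
  next
    fix V W show "adQ m (Gen (K mu)) V \<in> Cm m q \<Longrightarrow> adQ m (Gen (K mu)) W \<in> Cm m q \<Longrightarrow> adQ m (Gen (K mu)) (V + W) \<in> Cm m q"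
      by (simp add: adQ_add Cm_add)
  next
    fix V W show "adQ m (Gen (K mu)) V \<in> Cm m q \<Longrightarrow> adQ m (Gen (K mu)) W \<in> Cm m q \<Longrightarrow> V \<in> Cm m q \<Longrightarrow> W \<in> Cm m q \<Longrightarrow> adQ m (Gen (K mu)) (V * W) \<in> Cm m q"
      using adQ_K_mul[OF mu] Cm_mul Cm_ueq by blast
  qed
qed

lemma adQ_E_mul:
  assumes i: "1 \<le> i" "i \<le> m"
  shows "ueq m q (adQ m (Gen (E i)) (V * W))
     (adQ m (Gen (K (wneg (alpha i)))) V * adQ m (Gen (E i)) W + adQ m (Gen (E i)) V * W)"
proof -
  let ?k = "kQ (alpha i) :: 'a free" and ?k' = "kQ (wneg (alpha i)) :: 'a free" and ?e = "eQ i :: 'a free"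
  have v: "in_root_lattice m (alpha i)" using i by (rule alpha_valid)
  have "adQ m (Gen (K (wneg (alpha i)))) V * adQ m (Gen (E i)) W + adQ m (Gen (E i)) V * W
      = ?e * V * W - ?k' * V * (?k * ?k') * W * ?k * ?e"
    using i v by (simp add: adQ_K adQ_E wneg_valid algebra_simps)
  also have "ueq m q \<dots> (?e * V * W - ?k' * V * 1 * W * ?k * ?e)"
    by (intro ueq_diff ueq_mul ueq_refl Kinv_Q v)
  finally show ?thesis using i by (simp add: adQ_E mult.assoc ueq_sym)
qed

lemma adQ_E_Cm:
  fixes q :: "'k::field"
  assumes q: "q \<noteq> 0" and s: "q + inverse q \<noteq> 0" and i: "2 \<le> i" "i \<le> m" and V: "V \<in> Cm m q"
  shows "adQ m (Gen (E i)) V \<in> Cm m q"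
proof (rule Cm_adQ_cong[OF _ V])
  have v: "in_root_lattice m (alpha i)" using i by (intro alpha_valid) auto
  fix v assume vv: "v \<in> Ucm m q"
  show "adQ m (Gen (E i)) (abs_free v) \<in> Cm m q"
  proof (rule Ucm_induct_Cm[OF vv])
    fix c
    have "adQ m (Gen (E i)) (sc c :: 'k free) = sc c * (eQ i - kQ (wneg (alpha i)) * kQ (alpha i) * eQ i)"
      using i by (simp add: adQ_E mult.assoc sc_left_comm right_diff_distrib sc_central[of c, symmetric])
    also have "ueq m q \<dots> (sc c * (eQ i - (1::'k free) * eQ i))" by (intro ueq_sc ueq_diff ueq_mul ueq_refl Kinv'_Q v)
    finally show "adQ m (Gen (E i)) (sc c) \<in> Cm m q" using Cm_zero by (auto intro: Cm_ueq)
  next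
    fix j assume j: "1 \<le> j" "j \<le> m"
    show "adQ m (Gen (E i)) (ZQ m q j) \<in> Cm m q" by (rule adQ_E_Z[OF q s i j])
  next
    fix V W show "adQ m (Gen (E i)) V \<in> Cm m q \<Longrightarrow> adQ m (Gen (E i)) W \<in> Cm m q \<Longrightarrow> adQ m (Gen (E i)) (V + W) \<in> Cm m q"
      by (simp add: adQ_add Cm_add)
  next
    fix V W assume "adQ m (Gen (E i)) V \<in> Cm m q" "adQ m (Gen (E i)) W \<in> Cm m q" "V \<in> Cm m q" "W \<in> Cm m q"
    moreover have "adQ m (Gen (K (wneg (alpha i)))) V \<in> Cm m q"
      using adQ_K_Cm[OF q wneg_valid[OF v] \<open>V \<in> Cm m q\<close>] .
    ultimately show "adQ m (Gen (E i)) (V * W) \<in> Cm m q"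
      using adQ_E_mul[of i m q V W] i by (meson Cm_add Cm_mul Cm_ueq le_trans one_le_numeral)
  qed
qed



lemma image_Cm:
  fixes q :: "'k::field"
  assumes q: "q \<noteq> 0" and s: "q + inverse q \<noteq> 0" and h: "h \<in> Uge m"
  shows "\<forall>V. V \<in> Cm m q \<longrightarrow> adQ m (piA h) V \<in> Cm m q"
  using h unfolding Uge_def
proof (induction h rule: subalg.induct)
  case (scal c) then show ?case by (simp add: adQ_Scal Cm_sc)
next
  case (gen x)
  show ?case
  proof (intro allI impI)
    fix V assume V: "V \<in> Cm m q"
    from gen consider (E) i where "x = Gen (E i)" "1 \<le> i" "i \<le> m" | (K) mu where "x = Gen (K mu)" "in_root_lattice m mu"
      by blast
    then show "adQ m (piA x) V \<in> Cm m q"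
    proof cases
      case E
      show ?thesis
      proof (cases "i = 1")
        case True then show ?thesis using E by (simp add: adQ_Scal Cm_zero)
      next
        case False then show ?thesis using E adQ_E_Cm[OF q s _ _ V, of i] by simp
      qed
    next
      case K then show ?thesis using adQ_K_Cm[OF q _ V] by simp
    qed
  qed
next
  case (add x y) then show ?case by (simp add: adQ_Add Cm_add)
next
  case (mul x y) then show ?case by (simp add: adQ_Mul)
qed

definition mQ :: "nat \<Rightarrow> 'k::field free \<Rightarrow> 'k free \<Rightarrow> 'k \<times> 'k fexpr \<times> 'k fexpr \<Rightarrow> 'k free" where
  "mQ m V W t = (case t of (c,h1,h2) \<Rightarrow> sc c * (adQ m (piA h1) V * adQ m (piA h2) W))"

lemma sum_list_swap:
  fixes f :: "'a \<Rightarrow> 'b \<Rightarrow> 'c::comm_monoid_add"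
  shows "sum_list (map (\<lambda>y. sum_list (map (\<lambda>x. f x y) xs)) ys) = sum_list (map (\<lambda>x. sum_list (map (\<lambda>y. f x y) ys)) xs)"
proof (induction ys)
  case Nil then show ?case by (induction xs) simp_all
next
  case (Cons y ys) then show ?case
    by (simp add: sum_list_addf[of "\<lambda>x. f x y" "\<lambda>x. sum_list (map (f x) ys)" xs])
qed

lemma MA:
  fixes q :: "'k::field"
  assumes h: "h \<in> Uge m"
  shows "\<forall>V W. ueq m q (adQ m (piA h) (V * W)) (sum_list (map (mQ m V W) (Delta m h)))"
  using h unfolding Uge_def
proof (induction h rule: subalg.induct)
  case (scal c) then show ?case by (simp add: mQ_def adQ_Scal one_def)
next
  case (gen x)
  show ?case
  proof (intro allI)
    fix V W :: "'k free"
    from gen consider (E) i where "x = Gen (E i)" "1 \<le> i" "i \<le> m" | (K) mu where "x = Gen (K mu)" "in_root_lattice m mu"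
      by blast
    then show "ueq m q (adQ m (piA x) (V * W)) (sum_list (map (mQ m V W) (Delta m x)))"
    proof cases
      case E
      show ?thesis
      proof (cases "i = 1")
        case True then show ?thesis using E
          by (simp add: mQ_def adQ_Scal one_def Delta_gen_def valid_gen_def)
      next
        case False then show ?thesis using E adQ_E_mul[of i m q V W]
          by (simp add: mQ_def adQ_Scal one_def Delta_gen_def valid_gen_def)
      qed
    next
      case K then show ?thesis using adQ_K_mul[of m mu q V W]
        by (simp add: mQ_def Delta_gen_def valid_gen_def)
    qed
  qed
next
  case (add x y) then show ?case by (simp add: adQ_Add ueq_add)
next
  case (mul a b)
  show ?case
  proof (intro allI)
    fix V W :: "'k free"
    let ?A = "\<lambda>y U. adQ m (piA y) U"
    let ?G = "\<lambda>t1 t2. (case t1 of (c,x1,x2) \<Rightarrow> case t2 of (d,y1,y2) \<Rightarrow>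
                 sc (c*d) * (?A (Mul x1 y1) V * ?A (Mul x2 y2) W))"
    have "adQ m (piA (Mul a b)) (V * W) = ?A a (?A b (V * W))" by (simp add: adQ_Mul)
    also have "ueq m q \<dots> (?A a (sum_list (map (mQ m V W) (Delta m b))))"
      using mul.IH(2) by (intro adQ_cong) blast
    also have "?A a (sum_list (map (mQ m V W) (Delta m b))) = sum_list (map (\<lambda>t2. ?A a (mQ m V W t2)) (Delta m b))"
      by (rule adQ_sum)
    also have "ueq m q \<dots> (sum_list (map (\<lambda>t2. sum_list (map (\<lambda>t1. ?G t1 t2) (Delta m a))) (Delta m b)))"
    proof (rule ueq_sum_list)
      fix t2 assume "t2 \<in> set (Delta m b)"
      obtain d y1 y2 where t2: "t2 = (d,y1,y2)" by (cases t2) auto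
      have "?A a (mQ m V W t2) = sc d * ?A a (?A y1 V * ?A y2 W)" by (simp add: t2 mQ_def adQ_sc)
      also have "ueq m q \<dots> (sc d * sum_list (map (mQ m (?A y1 V) (?A y2 W)) (Delta m a)))"
        using mul.IH(1) by (intro ueq_sc) blast
      also have "sc d * sum_list (map (mQ m (?A y1 V) (?A y2 W)) (Delta m a)) = sum_list (map (\<lambda>t1. ?G t1 t2) (Delta m a))"
        unfolding sum_list_const_mult[symmetric]
        by (rule arg_cong[where f=sum_list], rule map_cong[OF HOL.refl])
           (auto simp: mQ_def t2 adQ_Mul sc_mult mult.assoc sc_sc_comm)
      finally show "ueq m q (?A a (mQ m V W t2)) (sum_list (map (\<lambda>t1. ?G t1 t2) (Delta m a)))" .
    qed
    also have "sum_list (map (\<lambda>t2. sum_list (map (\<lambda>t1. ?G t1 t2) (Delta m a))) (Delta m b))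
       = sum_list (map (\<lambda>t1. sum_list (map (\<lambda>t2. ?G t1 t2) (Delta m b))) (Delta m a))"
      by (rule sum_list_swap)
    also have "\<dots> = sum_list (map (mQ m V W) (Delta m (Mul a b)))"
      by (simp add: sum_list_concat_map map_map o_def mQ_def case_prod_unfold)
    finally show "ueq m q (adQ m (piA (Mul a b)) (V * W)) (sum_list (map (mQ m V W) (Delta m (Mul a b))))" .
  qed
qed

lemma CO:
  fixes q :: "'k::field"
  assumes h: "h \<in> Uge m"
  shows "ueq m q (adQ m (piA h) 1) (sc (counit m h))"
  using h unfolding Uge_def
proof (induction h rule: subalg.induct)
  case (scal c) then show ?case by (simp add: adQ_Scal)
next
  case (gen x)
  from gen consider (E) i where "x = Gen (E i)" "1 \<le> i" "i \<le> m" | (K) mu where "x = Gen (K mu)" "in_root_lattice m mu"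
    by blast
  then show ?case
  proof cases
    case E
    show ?thesis
    proof (cases "i = 1")
      case True then show ?thesis using E by (simp add: adQ_Scal counit_gen_def)
    next
      case False
      have v: "in_root_lattice m (alpha i)" using E by (intro alpha_valid) auto
      have "adQ m (Gen (E i)) (1 :: 'k free) = eQ i - kQ (wneg (alpha i)) * kQ (alpha i) * eQ i"
        using E by (simp add: adQ_E)
      also have "ueq m q \<dots> (eQ i - 1 * eQ i)" by (intro ueq_diff ueq_mul ueq_refl Kinv'_Q v)
      finally show ?thesis using False E by (simp add: counit_gen_def valid_gen_def)
    qed
  next
    case K
    have "ueq m q (kQ mu * 1 * kQ (wneg mu)) (1 :: 'k free)" using Kinv_Q[OF K(2)] by simp
    then show ?thesis using K by (simp add: adQ_K counit_gen_def valid_gen_def)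
  qed
next
  case (add x y) then show ?case by (simp add: adQ_Add sc_add ueq_add)
next
  case (mul a b)
  have "adQ m (piA (Mul a b)) 1 = adQ m (piA a) (adQ m (piA b) 1)" by (simp add: adQ_Mul)
  also have "ueq m q \<dots> (adQ m (piA a) (sc (counit m b) * 1))" using mul.IH(2) by (simp add: adQ_cong)
  also have "adQ m (piA a) (sc (counit m b) * 1) = sc (counit m b) * adQ m (piA a) 1" by (rule adQ_sc)
  also have "ueq m q \<dots> (sc (counit m b) * sc (counit m a))" using mul.IH(1) by (rule ueq_sc)
  also have "sc (counit m b) * sc (counit m a) = sc (counit m (Mul a b))" by (simp add: sc_mult[symmetric] mult.commute)
  finally show ?case .
qed

lemma Ueq_of_abs: "abs_free x = abs_free y \<Longrightarrow> Ueq m q x y"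
  by (simp add: free.abs_eq_iff FEq_Ueq)

lemma abs_lamA: "abs_free (lamA m h v) = adQ m (piA h) (abs_free v)"
  by (simp add: lamA_def abs_ad)

lemma q_s:
  fixes q :: "'k::field"
  assumes "q \<noteq> 0" and "\<forall>n::nat. n > 0 \<longrightarrow> q ^ n \<noteq> 1"
  shows "q + inverse q \<noteq> 0"
proof
  assume "q + inverse q = 0"
  then have "q * (q + inverse q) = 0" by simp
  then have "q * q = -1" using assms(1) by (simp add: distrib_left eq_neg_iff_add_eq_0)
  then have "q ^ 4 = 1" by (simp add: power4_eq_xxxx)
  then show False using assms(2) by auto
qed

theorem corollary6p2:
  fixes q :: "'k::field_char_0" and m :: nat
  assumes "alg_closed_field TYPE('k)"
    and "q \<noteq> 0" and "\<forall>n::nat. n > 0 \<longrightarrow> q ^ n \<noteq> 1"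
    and "m > 1"
  shows
    \<comment> \<open>Im(lambda_A) is contained in U_q^{c_m}\<close>
    "(\<forall>h \<in> Uge m. \<forall>v \<in> Ucm m q. \<exists>v' \<in> Ucm m q. Ueq m q (lamA m h v) v')
     \<comment> \<open>bilinearity\<close>
     \<and> (\<forall>h \<in> Uge m. \<forall>h' \<in> Uge m. \<forall>v \<in> Ucm m q. \<forall>a b.
          Ueq m q (lamA m (Add (smult a h) (smult b h')) v)
                  (Add (smult a (lamA m h v)) (smult b (lamA m h' v))))
     \<and> (\<forall>h \<in> Uge m. \<forall>v \<in> Ucm m q. \<forall>w \<in> Ucm m q. \<forall>a b.
          Ueq m q (lamA m h (Add (smult a v) (smult b w)))
                  (Add (smult a (lamA m h v)) (smult b (lamA m h w))))
     \<comment> \<open>module axioms\<close>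
     \<and> (\<forall>h \<in> Uge m. \<forall>h' \<in> Uge m. \<forall>v \<in> Ucm m q.
          Ueq m q (lamA m (Mul h h') v) (lamA m h (lamA m h' v)))
     \<and> (\<forall>v \<in> Ucm m q. Ueq m q (lamA m one v) v)
     \<comment> \<open>module algebra axioms\<close>
     \<and> (\<forall>h \<in> Uge m. \<forall>v \<in> Ucm m q. \<forall>w \<in> Ucm m q.
          Ueq m q (lamA m h (Mul v w))
                  (esum (map (\<lambda>(c, h1, h2). smult c (Mul (lamA m h1 v) (lamA m h2 w))) (Delta m h))))
     \<and> (\<forall>h \<in> Uge m. Ueq m q (lamA m h one) (smult (counit m h) one))"
proof (intro conjI ballI allI)
  have q: "q \<noteq> 0" by (rule assms(2))
  have s: "q + inverse q \<noteq> 0" by (rule q_s[OF assms(2,3)])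
  show "\<exists>v' \<in> Ucm m q. Ueq m q (lamA m h v) v'" if h: "h \<in> Uge m" and v: "v \<in> Ucm m q" for h v
  proof -
    have "adQ m (piA h) (abs_free v) \<in> Cm m q" using image_Cm[OF q s h] Cm_abs[OF v] by blast
    then obtain v' where "v' \<in> Ucm m q" "ueq m q (abs_free (lamA m h v)) (abs_free v')"
      unfolding Cm_def abs_lamA by blast
    then show ?thesis by (auto simp: ueq_abs)
  qed
  show "Ueq m q (lamA m (Add (smult a h) (smult b h')) v) (Add (smult a (lamA m h v)) (smult b (lamA m h' v)))" for h h' v a b
    by (rule Ueq_of_abs) (simp add: abs_lamA smult_def adQ_Add adQ_Mul adQ_Scal)
  show "Ueq m q (lamA m h (Add (smult a v) (smult b w))) (Add (smult a (lamA m h v)) (smult b (lamA m h w)))" for h v w a b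
    by (rule Ueq_of_abs) (simp add: abs_lamA adQ_add adQ_sc)
  show "Ueq m q (lamA m (Mul h h') v) (lamA m h (lamA m h' v))" for h h' v
    by (rule Ueq_of_abs) (simp add: abs_lamA adQ_Mul)
  show "Ueq m q (lamA m one v) v" for v
    by (rule Ueq_of_abs) (simp add: abs_lamA adQ_Scal one_def)
  show "Ueq m q (lamA m h (Mul v w)) (esum (map (\<lambda>(c, h1, h2). smult c (Mul (lamA m h1 v) (lamA m h2 w))) (Delta m h)))"
    if h: "h \<in> Uge m" for h v w
  proof -
    have "abs_free (esum (map (\<lambda>(c, h1, h2). smult c (Mul (lamA m h1 v) (lamA m h2 w))) (Delta m h)))
        = sum_list (map (mQ m (abs_free v) (abs_free w)) (Delta m h))"
      unfolding abs_esum map_map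
      by (rule arg_cong[where f=sum_list], rule map_cong[OF HOL.refl]) (auto simp: mQ_def abs_lamA)
    then show ?thesis using MA[OF h, of q] by (simp add: ueq_abs[symmetric] abs_lamA)
  qed
  show "Ueq m q (lamA m h one) (smult (counit m h) one)" if h: "h \<in> Uge m" for h
    using CO[OF h, of q] by (simp add: ueq_abs[symmetric] abs_lamA)
qed


end
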